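(* Let $C$ be an essentially finite decomposition, isomorphism filling category and $R$ a commutative $\mathbb{Q}$-algebra. An element $\alpha$ of the convolution algebra $([\overline{C}_1,R],\star)$ is invertible if and only if $\alpha(\overline{1}_x)$ is a unit of $R$ for every object $x$. In particular the map $\xi$ constantly equal to $1$ is invertible; its inverse $\mu$ satisfies $\mu(\overline{f})=1$ if $f$ is an isomorphism and, if $f$ is not an isomorphism, $$\mu(\overline{f})=\sum_{n\ge1}(-1)^n\big|\overline{\mathrm{PD}}_n\overline{f}\big|.$$
   Context: Two morphisms $f:x\to y$, $g:z\to w$ are isomorphic if there are isomorphisms $\alpha,\beta$ with $g\alpha=\beta f$; $\overline{f}$ is the class, $\overline{C}_1$ the set of classes. An $n$-decomposition of $\overline{f}$ is a tuple $(f_1,\dots,f_n)$ of composable morphisms with $f_n\cdots f_1=\beta^{-1}f\alpha$ for isomorphisms $\alpha,\beta$; isomorphisms of decompositions are families of isomorphisms between the intermediate objects making all squares commute; $\overline{\mathrm{D}}_n\overline{f}$ is the set of isomorphism classes. For $n\ge2$, $\overline{\mathrm{PD}}_n\overline{f}$ is the set of classes of decompositions with no $f_i$ an isomorphism, and $\overline{\mathrm{PD}}_1\overline{f}=\overline{\mathrm{D}}_1\overline{f}$. $C$ is an essentially finite decomposition category if $\bigsqcup_n\overline{\mathrm{PD}}_n\overline{f}$ is finite for all $\overline f$. $C$ is isomorphism filling if for any commutative square $x\to y_1\to y$, $x\to y_2\to y$ with $y_1\cong y_2$ there is an isomorphism $y_1\to y_2$ making both triangles commute. The convolution product is $(\alpha\star\beta)(\overline{f})=\sum_{\overline{(f_1,f_2)}\in\overline{\mathrm{D}}_2\overline{f}}\alpha(\overline{f}_1)\beta(\overline{f}_2)$.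 *)

theory Defs
  imports Main
begin

text \<open>A (possibly large-homset, but set-carried) category: objects, morphisms,
  domain, codomain, identities, composition.  Comp g f means "g after f".\<close>

record ('o, 'm) cat =
  Ob   :: "'o set"
  Mor  :: "'m set"
  Dom  :: "'m \<Rightarrow> 'o"
  Cod  :: "'m \<Rightarrow> 'o"
  Idm  :: "'o \<Rightarrow> 'm"
  Comp :: "'m \<Rightarrow> 'm \<Rightarrow> 'm"

definition category :: "('o, 'm) cat \<Rightarrow> bool" where
  "category C \<longleftrightarrow>
     (\<forall>f\<in>Mor C. Dom C f \<in> Ob C \<and> Cod C f \<in> Ob C) \<and>
     (\<forall>x\<in>Ob C. Idm C x \<in> Mor C \<and> Dom C (Idm C x) = x \<and> Cod C (Idm C x) = x) \<and>
     (\<forall>f\<in>Mor C. \<forall>g\<in>Mor C. Cod C f = Dom C g \<longrightarrow>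
        Comp C g f \<in> Mor C \<and> Dom C (Comp C g f) = Dom C f \<and> Cod C (Comp C g f) = Cod C g) \<and>
     (\<forall>f\<in>Mor C. \<forall>g\<in>Mor C. \<forall>h\<in>Mor C. Cod C f = Dom C g \<longrightarrow> Cod C g = Dom C h \<longrightarrow>
        Comp C h (Comp C g f) = Comp C (Comp C h g) f) \<and>
     (\<forall>f\<in>Mor C. Comp C f (Idm C (Dom C f)) = f \<and> Comp C (Idm C (Cod C f)) f = f)"

definition iso :: "('o, 'm) cat \<Rightarrow> 'm \<Rightarrow> bool" where
  "iso C f \<longleftrightarrow> f \<in> Mor C \<and> (\<exists>g\<in>Mor C. Dom C g = Cod C f \<and> Cod C g = Dom C f \<and>
      Comp C g f = Idm C (Dom C f) \<and> Comp C f g = Idm C (Cod C f))"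

definition iso_obj :: "('o, 'm) cat \<Rightarrow> 'o \<Rightarrow> 'o \<Rightarrow> bool" where
  "iso_obj C x y \<longleftrightarrow> (\<exists>h. iso C h \<and> Dom C h = x \<and> Cod C h = y)"

definition mor_iso :: "('o, 'm) cat \<Rightarrow> 'm \<Rightarrow> 'm \<Rightarrow> bool" where
  "mor_iso C f g \<longleftrightarrow> f \<in> Mor C \<and> g \<in> Mor C \<and>
     (\<exists>a b. iso C a \<and> iso C b \<and> Dom C a = Dom C f \<and> Cod C a = Dom C g \<and>
            Dom C b = Cod C f \<and> Cod C b = Cod C g \<and> Comp C g a = Comp C b f)"

definition mclass :: "('o, 'm) cat \<Rightarrow> 'm \<Rightarrow> 'm set" where
  "mclass C f = {g. mor_iso C f g}"

definition Cbar1 :: "('o, 'm) cat \<Rightarrow> 'm set set" where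
  "Cbar1 C = mclass C ` Mor C"

text \<open>Decompositions are lists [f_1, ..., f_n] of composable morphisms
  (f_1 applied first).\<close>
definition composable :: "('o, 'm) cat \<Rightarrow> 'm list \<Rightarrow> bool" where
  "composable C ds \<longleftrightarrow> set ds \<subseteq> Mor C \<and>
     (\<forall>i. Suc i < length ds \<longrightarrow> Cod C (ds ! i) = Dom C (ds ! Suc i))"

fun comp_list :: "('o, 'm) cat \<Rightarrow> 'm list \<Rightarrow> 'm" where
  "comp_list C [] = undefined"
| "comp_list C (f # fs) = foldl (\<lambda>acc g. Comp C g acc) f fs"

definition dobj :: "('o, 'm) cat \<Rightarrow> 'm list \<Rightarrow> nat \<Rightarrow> 'o" where
  "dobj C ds i = (if i < length ds then Dom C (ds ! i) else Cod C (last ds))"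

definition dec_iso :: "('o, 'm) cat \<Rightarrow> 'm list \<Rightarrow> 'm list \<Rightarrow> bool" where
  "dec_iso C ds es \<longleftrightarrow> length ds = length es \<and> composable C ds \<and> composable C es \<and>
     (\<exists>\<phi> :: nat \<Rightarrow> 'm.
        (\<forall>i\<le>length ds. iso C (\<phi> i) \<and> Dom C (\<phi> i) = dobj C ds i \<and> Cod C (\<phi> i) = dobj C es i) \<and>
        (\<forall>i<length ds. Comp C (es ! i) (\<phi> i) = Comp C (\<phi> (Suc i)) (ds ! i)))"

definition dclass :: "('o, 'm) cat \<Rightarrow> 'm list \<Rightarrow> 'm list set" where
  "dclass C ds = {es. dec_iso C ds es}"

definition decomps :: "('o, 'm) cat \<Rightarrow> nat \<Rightarrow> 'm set \<Rightarrow> 'm list set" where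
  "decomps C n c = {ds. length ds = n \<and> composable C ds \<and> comp_list C ds \<in> c}"

definition Dbar :: "('o, 'm) cat \<Rightarrow> nat \<Rightarrow> 'm set \<Rightarrow> 'm list set set" where
  "Dbar C n c = dclass C ` decomps C n c"

definition PDbar :: "('o, 'm) cat \<Rightarrow> nat \<Rightarrow> 'm set \<Rightarrow> 'm list set set" where
  "PDbar C n c = (if n = 1 then Dbar C 1 c
                  else dclass C ` {ds \<in> decomps C n c. \<forall>i<n. \<not> iso C (ds ! i)})"

definition ess_finite_decomp :: "('o, 'm) cat \<Rightarrow> bool" where
  "ess_finite_decomp C \<longleftrightarrow> (\<forall>c\<in>Cbar1 C. finite (SIGMA n:{1..}. PDbar C n c))"

definition iso_filling :: "('o, 'm) cat \<Rightarrow> bool" where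
  "iso_filling C \<longleftrightarrow>
     (\<forall>a1 b1 a2 b2. a1 \<in> Mor C \<and> b1 \<in> Mor C \<and> a2 \<in> Mor C \<and> b2 \<in> Mor C \<and>
        Dom C a1 = Dom C a2 \<and> Cod C b1 = Cod C b2 \<and>
        Cod C a1 = Dom C b1 \<and> Cod C a2 = Dom C b2 \<and>
        Comp C b1 a1 = Comp C b2 a2 \<and> iso_obj C (Cod C a1) (Cod C a2) \<longrightarrow>
        (\<exists>h. iso C h \<and> Dom C h = Cod C a1 \<and> Cod C h = Cod C a2 \<and>
             Comp C h a1 = a2 \<and> Comp C b2 h = b1))"

text \<open>Convolution product on functions C1 -> R (only values on classes matter).\<close>
definition conv :: "('o, 'm) cat \<Rightarrow> ('m set \<Rightarrow> 'r::comm_ring_1) \<Rightarrow> ('m set \<Rightarrow> 'r) \<Rightarrow> 'm set \<Rightarrow> 'r" where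
  "conv C \<alpha> \<beta> c = (\<Sum>D\<in>Dbar C 2 c.
      (let ds = (SOME ds. ds \<in> D) in \<alpha> (mclass C (ds ! 0)) * \<beta> (mclass C (ds ! 1))))"

definition conv_identity :: "('o, 'm) cat \<Rightarrow> ('m set \<Rightarrow> 'r::comm_ring_1) \<Rightarrow> bool" where
  "conv_identity C e \<longleftrightarrow>
     (\<forall>\<alpha>. \<forall>c\<in>Cbar1 C. conv C e \<alpha> c = \<alpha> c \<and> conv C \<alpha> e c = \<alpha> c)"

definition conv_inverse :: "('o, 'm) cat \<Rightarrow> ('m set \<Rightarrow> 'r::comm_ring_1) \<Rightarrow> ('m set \<Rightarrow> 'r) \<Rightarrow> bool" where
  "conv_inverse C \<alpha> \<beta> \<longleftrightarrow> (\<exists>e. conv_identity C e \<and>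
     (\<forall>c\<in>Cbar1 C. conv C \<alpha> \<beta> c = e c \<and> conv C \<beta> \<alpha> c = e c))"

definition conv_invertible :: "('o, 'm) cat \<Rightarrow> ('m set \<Rightarrow> 'r::comm_ring_1) \<Rightarrow> bool" where
  "conv_invertible C \<alpha> \<longleftrightarrow> (\<exists>\<beta>. conv_inverse C \<alpha> \<beta>)"

text \<open>A commutative ring is (necessarily uniquely) a Q-algebra iff every positive
  integer is a unit.\<close>
definition rat_algebra :: "'r::comm_ring_1 itself \<Rightarrow> bool" where
  "rat_algebra _ \<longleftrightarrow> (\<forall>n::nat. n > 0 \<longrightarrow> (of_nat n :: 'r) dvd 1)"

end

theory Submission
  imports Defs
begin

locale CC = fixes C :: "('o,'m) cat" assumes cat: "category C"
begin

lemma dom_ob: "f \<in> Mor C \<Longrightarrow> Dom C f \<in> Ob C" using cat unfolding category_def by blast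
lemma cod_ob: "f \<in> Mor C \<Longrightarrow> Cod C f \<in> Ob C" using cat unfolding category_def by blast
lemma id_mor[simp]: "x \<in> Ob C \<Longrightarrow> Idm C x \<in> Mor C" using cat unfolding category_def by blast
lemma id_dom[simp]: "x \<in> Ob C \<Longrightarrow> Dom C (Idm C x) = x" using cat unfolding category_def by blast
lemma id_cod[simp]: "x \<in> Ob C \<Longrightarrow> Cod C (Idm C x) = x" using cat unfolding category_def by blast
lemma comp_mor[simp]: "f \<in> Mor C \<Longrightarrow> g \<in> Mor C \<Longrightarrow> Cod C f = Dom C g \<Longrightarrow> Comp C g f \<in> Mor C"
  using cat unfolding category_def by blast
lemma comp_dom[simp]: "f \<in> Mor C \<Longrightarrow> g \<in> Mor C \<Longrightarrow> Cod C f = Dom C g \<Longrightarrow> Dom C (Comp C g f) = Dom C f"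
  using cat unfolding category_def by blast
lemma comp_cod[simp]: "f \<in> Mor C \<Longrightarrow> g \<in> Mor C \<Longrightarrow> Cod C f = Dom C g \<Longrightarrow> Cod C (Comp C g f) = Cod C g"
  using cat unfolding category_def by blast
lemma assoc: "f \<in> Mor C \<Longrightarrow> g \<in> Mor C \<Longrightarrow> h \<in> Mor C \<Longrightarrow> Cod C f = Dom C g \<Longrightarrow> Cod C g = Dom C h \<Longrightarrow>
   Comp C h (Comp C g f) = Comp C (Comp C h g) f"
  using cat unfolding category_def by blast
lemma id_r[simp]: "f \<in> Mor C \<Longrightarrow> Comp C f (Idm C (Dom C f)) = f" using cat unfolding category_def by blast
lemma id_l[simp]: "f \<in> Mor C \<Longrightarrow> Comp C (Idm C (Cod C f)) f = f" using cat unfolding category_def by blast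

lemma id_r'[simp]: "f \<in> Mor C \<Longrightarrow> x = Dom C f \<Longrightarrow> Comp C f (Idm C x) = f" by simp
lemma id_l'[simp]: "f \<in> Mor C \<Longrightarrow> x = Cod C f \<Longrightarrow> Comp C (Idm C x) f = f" by simp

definition inv :: "'m \<Rightarrow> 'm" where
  "inv f = (SOME g. g \<in> Mor C \<and> Dom C g = Cod C f \<and> Cod C g = Dom C f \<and>
      Comp C g f = Idm C (Dom C f) \<and> Comp C f g = Idm C (Cod C f))"

lemma iso_mor: "iso C f \<Longrightarrow> f \<in> Mor C" unfolding iso_def by blast

lemma inv_props: assumes "iso C f"
  shows "inv f \<in> Mor C" "Dom C (inv f) = Cod C f" "Cod C (inv f) = Dom C f"
    "Comp C (inv f) f = Idm C (Dom C f)" "Comp C f (inv f) = Idm C (Cod C f)"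
proof -
  have "\<exists>g. g \<in> Mor C \<and> Dom C g = Cod C f \<and> Cod C g = Dom C f \<and>
      Comp C g f = Idm C (Dom C f) \<and> Comp C f g = Idm C (Cod C f)" using assms unfolding iso_def by blast
  from someI_ex[OF this] show "inv f \<in> Mor C" "Dom C (inv f) = Cod C f" "Cod C (inv f) = Dom C f"
    "Comp C (inv f) f = Idm C (Dom C f)" "Comp C f (inv f) = Idm C (Cod C f)" unfolding inv_def by blast+
qed

lemma iso_inv: "iso C f \<Longrightarrow> iso C (inv f)"
  unfolding iso_def[of C "inv f"] using inv_props[of f] iso_mor[of f] by auto

lemma iso_id: "x \<in> Ob C \<Longrightarrow> iso C (Idm C x)"
  unfolding iso_def by (rule conjI, simp, rule bexI[of _ "Idm C x"], auto)

lemma iso_comp: assumes "iso C f" "iso C g" "Cod C f = Dom C g" shows "iso C (Comp C g f)"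
proof -
  have m: "f \<in> Mor C" "g \<in> Mor C" using assms iso_mor by auto
  note i = inv_props[OF assms(1)] inv_props[OF assms(2)]
  have "Comp C (Comp C (inv f) (inv g)) (Comp C g f) = Comp C (inv f) (Comp C (inv g) (Comp C g f))"
    using m i assms(3) assoc[of "Comp C g f" "inv g" "inv f"] by simp
  also have "\<dots> = Comp C (inv f) (Comp C (Comp C (inv g) g) f)"
    using m i assms(3) assoc[of f g "inv g"] by simp
  also have "\<dots> = Idm C (Dom C f)" using m i assms(3) by (simp)
  finally have 1: "Comp C (Comp C (inv f) (inv g)) (Comp C g f) = Idm C (Dom C f)" .
  have "Comp C (Comp C g f) (Comp C (inv f) (inv g)) = Comp C g (Comp C f (Comp C (inv f) (inv g)))"
    using m i assms(3) assoc[of "Comp C (inv f) (inv g)" f g] by simp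
  also have "\<dots> = Comp C g (Comp C (Comp C f (inv f)) (inv g))"
    using m i assms(3) assoc[of "inv g" "inv f" f] by simp
  also have "\<dots> = Idm C (Cod C g)" using m i assms(3) by (simp)
  finally have 2: "Comp C (Comp C g f) (Comp C (inv f) (inv g)) = Idm C (Cod C g)" .
  show ?thesis unfolding iso_def using m i assms(3) 1 2
    by (intro conjI bexI[of _ "Comp C (inv f) (inv g)"]) auto
qed

lemmas inv_simps[simp] = inv_props
lemma iso_mor'[simp]: "iso C f \<Longrightarrow> f \<in> Mor C" by (rule iso_mor)

lemma transpose: assumes "iso C a" "iso C b" "f \<in> Mor C" "g \<in> Mor C"
  "Dom C a = Dom C f" "Cod C a = Dom C g" "Dom C b = Cod C f" "Cod C b = Cod C g"
  "Comp C g a = Comp C b f"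
shows "Comp C f (inv a) = Comp C (inv b) g"
proof -
  have "Comp C (inv b) g = Comp C (inv b) (Comp C g (Comp C a (inv a)))" using assms by simp
  also have "\<dots> = Comp C (inv b) (Comp C (Comp C g a) (inv a))" using assms assoc[of "inv a" a g] by simp
  also have "\<dots> = Comp C (inv b) (Comp C b (Comp C f (inv a)))" using assms assoc[of "inv a" f b] by simp
  also have "\<dots> = Comp C (Comp C (inv b) b) (Comp C f (inv a))" using assms assoc[of "Comp C f (inv a)" b "inv b"] by simp
  also have "\<dots> = Comp C f (inv a)" using assms by simp
  finally show ?thesis by simp
qed

lemma iso_cancel_r: assumes "iso C f" "g \<in> Mor C" "Cod C f = Dom C g" "iso C (Comp C g f)" shows "iso C g"
proof -
  have eq: "Comp C (Comp C g f) (inv f) = g"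
  proof -
    have "Comp C (Comp C g f) (inv f) = Comp C g (Comp C f (inv f))" using assms assoc[of "inv f" f g] by simp
    also have "\<dots> = g" using assms by simp
    finally show ?thesis by simp
  qed
  have "iso C (Comp C (Comp C g f) (inv f))" by (rule iso_comp) (use assms iso_inv in auto)
  then show ?thesis using eq by simp
qed

lemma iso_cancel_l: assumes "iso C g" "f \<in> Mor C" "Cod C f = Dom C g" "iso C (Comp C g f)" shows "iso C f"
proof -
  have eq: "Comp C (inv g) (Comp C g f) = f"
  proof -
    have "Comp C (inv g) (Comp C g f) = Comp C (Comp C (inv g) g) f" using assms assoc[of f g "inv g"] by simp
    also have "\<dots> = f" using assms by simp
    finally show ?thesis by simp
  qed
  have "iso C (Comp C (inv g) (Comp C g f))" by (rule iso_comp) (use assms iso_inv in auto)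
  then show ?thesis using eq by simp
qed

lemma mor_isoI: "f \<in> Mor C \<Longrightarrow> g \<in> Mor C \<Longrightarrow> iso C a \<Longrightarrow> iso C b \<Longrightarrow> Dom C a = Dom C f \<Longrightarrow>
  Cod C a = Dom C g \<Longrightarrow> Dom C b = Cod C f \<Longrightarrow> Cod C b = Cod C g \<Longrightarrow> Comp C g a = Comp C b f \<Longrightarrow> mor_iso C f g"
  unfolding mor_iso_def by blast

lemma mor_iso_refl: "f \<in> Mor C \<Longrightarrow> mor_iso C f f"
  unfolding mor_iso_def
  by (rule conjI, simp, rule conjI, simp, rule exI[of _ "Idm C (Dom C f)"], rule exI[of _ "Idm C (Cod C f)"])
     (simp add: iso_id dom_ob cod_ob)

lemma mor_iso_sym: assumes "mor_iso C f g" shows "mor_iso C g f"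
proof -
  obtain a b where A: "f \<in> Mor C" "g \<in> Mor C" "iso C a" "iso C b"
      "Dom C a = Dom C f" "Cod C a = Dom C g" "Dom C b = Cod C f" "Cod C b = Cod C g" "Comp C g a = Comp C b f"
    using assms(1) unfolding mor_iso_def by blast
  show ?thesis
    apply (rule mor_isoI[where a="inv a" and b="inv b"])
    using A transpose[of a b f g] iso_inv by auto
qed

lemma mor_iso_trans: assumes "mor_iso C f g" "mor_iso C g h" shows "mor_iso C f h"
proof -
  obtain a b where A: "f \<in> Mor C" "g \<in> Mor C" "iso C a" "iso C b"
      "Dom C a = Dom C f" "Cod C a = Dom C g" "Dom C b = Cod C f" "Cod C b = Cod C g" "Comp C g a = Comp C b f"
    using assms(1) unfolding mor_iso_def by blast
  obtain a' b' where B: "h \<in> Mor C" "iso C a'" "iso C b'"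
      "Dom C a' = Dom C g" "Cod C a' = Dom C h" "Dom C b' = Cod C g" "Cod C b' = Cod C h" "Comp C h a' = Comp C b' g"
    using assms(2) unfolding mor_iso_def by blast
  have "Comp C h (Comp C a' a) = Comp C (Comp C h a') a" using A B assoc[of a a' h] by simp
  also have "\<dots> = Comp C (Comp C b' g) a" using B by simp
  also have "\<dots> = Comp C b' (Comp C g a)" using A B assoc[of a g b'] by simp
  also have "\<dots> = Comp C b' (Comp C b f)" using A by simp
  also have "\<dots> = Comp C (Comp C b' b) f" using A B assoc[of f b b'] by simp
  finally have E: "Comp C h (Comp C a' a) = Comp C (Comp C b' b) f" .
  show ?thesis
    apply (rule mor_isoI[where a="Comp C a' a" and b="Comp C b' b"])
    using A B E iso_comp by auto
qed

lemma mor_iso_mor: "mor_iso C f g \<Longrightarrow> f \<in> Mor C \<and> g \<in> Mor C" unfolding mor_iso_def by blast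

lemma mor_iso_iso: assumes "mor_iso C f g" "iso C f" shows "iso C g"
proof -
  obtain a b where A: "f \<in> Mor C" "g \<in> Mor C" "iso C a" "iso C b"
      "Dom C a = Dom C f" "Cod C a = Dom C g" "Dom C b = Cod C f" "Cod C b = Cod C g" "Comp C g a = Comp C b f"
    using assms unfolding mor_iso_def by blast
  have "iso C (Comp C g a)" using A iso_comp assms(2) by simp
  then show ?thesis using iso_cancel_r[of a g] A by simp
qed

lemma mor_iso_iso_iff: "mor_iso C f g \<Longrightarrow> iso C f \<longleftrightarrow> iso C g"
  using mor_iso_iso mor_iso_sym by blast

lemma mclass_eq: assumes "mor_iso C f g" shows "mclass C f = mclass C g"
proof -
  have "mor_iso C f h \<longleftrightarrow> mor_iso C g h" for h
    using assms mor_iso_sym[OF assms] mor_iso_trans[of f g h] mor_iso_trans[of g f h] by blast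
  then show ?thesis unfolding mclass_def by blast
qed

lemma mclass_eq_iff: assumes "f \<in> Mor C" shows "mclass C f = mclass C g \<longleftrightarrow> mor_iso C f g"
proof
  assume "mclass C f = mclass C g"
  moreover have "f \<in> mclass C f" using mor_iso_refl[OF assms] unfolding mclass_def by simp
  ultimately have "mor_iso C g f" unfolding mclass_def by simp
  then show "mor_iso C f g" by (rule mor_iso_sym)
qed (rule mclass_eq)

lemma in_mclass: "g \<in> mclass C f \<longleftrightarrow> mor_iso C f g" unfolding mclass_def by simp

lemma iso_idclass: "iso C f \<Longrightarrow> mor_iso C (Idm C (Dom C f)) f"
  unfolding mor_iso_def
  by (rule conjI, simp add: dom_ob, rule conjI, simp, rule exI[of _ "Idm C (Dom C f)"], rule exI[of _ "f"])
     (simp add: iso_id dom_ob cod_ob)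

lemma mor_iso_dom: "mor_iso C f g \<Longrightarrow> iso_obj C (Dom C f) (Dom C g)"
  unfolding mor_iso_def iso_obj_def by blast
lemma mor_iso_cod: "mor_iso C f g \<Longrightarrow> iso_obj C (Cod C f) (Cod C g)"
  unfolding mor_iso_def iso_obj_def by blast
lemma iso_obj_idclass: "iso_obj C x y \<Longrightarrow> mclass C (Idm C x) = mclass C (Idm C y)"
proof -
  assume "iso_obj C x y"
  then obtain h where h: "iso C h" "Dom C h = x" "Cod C h = y" unfolding iso_obj_def by blast
  then have "mor_iso C (Idm C x) h" using iso_idclass by blast
  moreover have "mor_iso C h (Idm C y)"
    apply (rule mor_isoI[where a="h" and b="Idm C y"])
    using h by (auto simp add: iso_id dom_ob cod_ob iso_inv)
  ultimately show ?thesis using mclass_eq mor_iso_trans by blast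
qed

end

context CC begin

abbreviation cl where "cl \<equiv> comp_list C"

lemma composable_Nil[simp]: "composable C []" unfolding composable_def by simp

lemma composable_Cons: "composable C (x # xs) \<longleftrightarrow> x \<in> Mor C \<and> composable C xs \<and> (xs \<noteq> [] \<longrightarrow> Cod C x = Dom C (hd xs))"
proof
  assume a: "composable C (x # xs)"
  then have "x \<in> Mor C" "set xs \<subseteq> Mor C" unfolding composable_def by auto
  moreover have "\<forall>i. Suc i < length xs \<longrightarrow> Cod C (xs ! i) = Dom C (xs ! Suc i)"
  proof (intro allI impI)
    fix i assume "Suc i < length xs"
    then have "Suc (Suc i) < length (x#xs)" by simp
    then show "Cod C (xs ! i) = Dom C (xs ! Suc i)" using a unfolding composable_def by force
  qed
  moreover have "xs \<noteq> [] \<longrightarrow> Cod C x = Dom C (hd xs)"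
  proof
    assume "xs \<noteq> []" then have "Suc 0 < length (x#xs)" by simp
    then have "Cod C ((x#xs) ! 0) = Dom C ((x#xs) ! Suc 0)" using a unfolding composable_def by blast
    then show "Cod C x = Dom C (hd xs)" using \<open>xs \<noteq> []\<close> by (simp add: hd_conv_nth)
  qed
  ultimately show "x \<in> Mor C \<and> composable C xs \<and> (xs \<noteq> [] \<longrightarrow> Cod C x = Dom C (hd xs))"
    unfolding composable_def by blast
next
  assume a: "x \<in> Mor C \<and> composable C xs \<and> (xs \<noteq> [] \<longrightarrow> Cod C x = Dom C (hd xs))"
  show "composable C (x # xs)" unfolding composable_def
  proof (intro conjI allI impI)
    show "set (x # xs) \<subseteq> Mor C" using a unfolding composable_def by auto
    fix i assume i: "Suc i < length (x # xs)"
    show "Cod C ((x # xs) ! i) = Dom C ((x # xs) ! Suc i)"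
    proof (cases i)
      case 0 then show ?thesis using a i by (cases xs) auto
    next
      case (Suc j) then show ?thesis using a i unfolding composable_def by auto
    qed
  qed
qed

lemma composable_single[simp]: "composable C [x] \<longleftrightarrow> x \<in> Mor C" by (simp add: composable_Cons)

lemma composable_append: "composable C (xs @ ys) \<longleftrightarrow> composable C xs \<and> composable C ys \<and>
   (xs \<noteq> [] \<longrightarrow> ys \<noteq> [] \<longrightarrow> Cod C (last xs) = Dom C (hd ys))"
  by (induction xs) (auto simp: composable_Cons)

lemma composable_mor: "composable C xs \<Longrightarrow> i < length xs \<Longrightarrow> xs ! i \<in> Mor C"
  unfolding composable_def by auto

lemma composable_link: "composable C xs \<Longrightarrow> Suc i < length xs \<Longrightarrow> Cod C (xs ! i) = Dom C (xs ! Suc i)"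
  unfolding composable_def by auto

lemma cl_snoc: "xs \<noteq> [] \<Longrightarrow> cl (xs @ [y]) = Comp C y (cl xs)"
  by (cases xs) auto

lemma cl_single[simp]: "cl [x] = x" by simp

lemma cl_props: "composable C xs \<Longrightarrow> xs \<noteq> [] \<Longrightarrow>
   cl xs \<in> Mor C \<and> Dom C (cl xs) = Dom C (hd xs) \<and> Cod C (cl xs) = Cod C (last xs)"
proof (induction xs rule: rev_induct)
  case Nil then show ?case by simp
next
  case (snoc y xs)
  show ?case
  proof (cases "xs = []")
    case True then show ?thesis using snoc by simp
  next
    case False
    then have c: "composable C xs" "y \<in> Mor C" "Cod C (last xs) = Dom C y" using snoc(2) by (auto simp: composable_append)
    then show ?thesis using snoc(1) False by (simp add: cl_snoc)
  qed
qed

lemma cl_mor[simp]: "composable C xs \<Longrightarrow> xs \<noteq> [] \<Longrightarrow> cl xs \<in> Mor C" using cl_props by blast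
lemma cl_dom[simp]: "composable C xs \<Longrightarrow> xs \<noteq> [] \<Longrightarrow> Dom C (cl xs) = Dom C (hd xs)" using cl_props by blast
lemma cl_cod[simp]: "composable C xs \<Longrightarrow> xs \<noteq> [] \<Longrightarrow> Cod C (cl xs) = Cod C (last xs)" using cl_props by blast

lemma cl_append: "composable C (xs @ ys) \<Longrightarrow> xs \<noteq> [] \<Longrightarrow> ys \<noteq> [] \<Longrightarrow> cl (xs @ ys) = Comp C (cl ys) (cl xs)"
proof (induction ys rule: rev_induct)
  case Nil then show ?case by simp
next
  case (snoc y ys)
  show ?case
  proof (cases "ys = []")
    case True then show ?thesis using snoc by (simp add: cl_snoc)
  next
    case False
    have c: "composable C (xs @ ys)" "composable C xs" "composable C ys" "y \<in> Mor C" "Cod C (last ys) = Dom C y"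
      "Cod C (last xs) = Dom C (hd ys)"
      using snoc(2) False snoc(3) by (auto simp: composable_append)
    have "cl (xs @ ys @ [y]) = Comp C y (cl (xs @ ys))" using cl_snoc[of "xs @ ys" y] snoc(3) by simp
    also have "\<dots> = Comp C y (Comp C (cl ys) (cl xs))" using snoc(1)[OF c(1) snoc(3) False] by simp
    also have "\<dots> = Comp C (Comp C y (cl ys)) (cl xs)"
      using assoc[of "cl xs" "cl ys" y] c False snoc(3) by simp
    also have "\<dots> = Comp C (cl (ys @ [y])) (cl xs)" using cl_snoc[OF False] by simp
    finally show ?thesis by simp
  qed
qed

lemma cl_Cons: "composable C (x # xs) \<Longrightarrow> xs \<noteq> [] \<Longrightarrow> cl (x # xs) = Comp C (cl xs) x"
  using cl_append[of "[x]" xs] by simp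

lemma dobj_lt: "i < length ds \<Longrightarrow> dobj C ds i = Dom C (ds ! i)" unfolding dobj_def by simp
lemma dobj_len: "dobj C ds (length ds) = Cod C (last ds)" unfolding dobj_def by simp
lemma dobj_Suc: assumes "composable C ds" "i < length ds" shows "dobj C ds (Suc i) = Cod C (ds ! i)"
proof (cases "Suc i < length ds")
  case True then show ?thesis unfolding dobj_def using composable_link[OF assms(1) True] by simp
next
  case False
  then have "i = length ds - 1" "ds \<noteq> []" using assms by auto
  then show ?thesis unfolding dobj_def using False assms by (simp add: last_conv_nth)
qed
lemma dobj_0: "ds \<noteq> [] \<Longrightarrow> dobj C ds 0 = Dom C (hd ds)" unfolding dobj_def by (simp add: hd_conv_nth)
lemma dobj_ob: "composable C ds \<Longrightarrow> ds \<noteq> [] \<Longrightarrow> i \<le> length ds \<Longrightarrow> dobj C ds i \<in> Ob C"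
  unfolding dobj_def using composable_mor[of ds] dom_ob cod_ob by (auto simp: last_conv_nth)

lemma dobj_append1: "composable C (xs @ ys) \<Longrightarrow> ys \<noteq> [] \<Longrightarrow> i \<le> length xs \<Longrightarrow> xs \<noteq> [] \<Longrightarrow>
   dobj C (xs @ ys) i = dobj C xs i"
  unfolding dobj_def by (auto simp: nth_append composable_append hd_conv_nth)

lemma dobj_append2: "ys \<noteq> [] \<Longrightarrow> dobj C (xs @ ys) (length xs + i) = dobj C ys i"
  unfolding dobj_def by (auto simp: nth_append)

definition via :: "'m list \<Rightarrow> 'm list \<Rightarrow> (nat \<Rightarrow> 'm) \<Rightarrow> bool" where
  "via ds es \<phi> \<longleftrightarrow> (\<forall>i\<le>length ds. iso C (\<phi> i) \<and> Dom C (\<phi> i) = dobj C ds i \<and> Cod C (\<phi> i) = dobj C es i) \<and>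
        (\<forall>i<length ds. Comp C (es ! i) (\<phi> i) = Comp C (\<phi> (Suc i)) (ds ! i))"

lemma dec_iso_via: "dec_iso C ds es \<longleftrightarrow> length ds = length es \<and> composable C ds \<and> composable C es \<and> (\<exists>\<phi>. via ds es \<phi>)"
  unfolding dec_iso_def via_def by simp

lemma via_refl: assumes "composable C ds" "ds \<noteq> []" shows "via ds ds (\<lambda>i. Idm C (dobj C ds i))"
  unfolding via_def
proof (intro conjI allI impI)
  fix i assume "i \<le> length ds"
  then show "iso C (Idm C (dobj C ds i))" "Dom C (Idm C (dobj C ds i)) = dobj C ds i"
       "Cod C (Idm C (dobj C ds i)) = dobj C ds i" using dobj_ob[OF assms] iso_id by auto
next
  fix i assume i: "i < length ds"
  have m: "ds ! i \<in> Mor C" using composable_mor assms i by blast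
  show "Comp C (ds ! i) (Idm C (dobj C ds i)) = Comp C (Idm C (dobj C ds (Suc i))) (ds ! i)"
    using m i dobj_lt dobj_Suc assms by simp
qed

lemma via_typing: assumes "via ds es \<phi>" "composable C ds" "composable C es" "length ds = length es" "i < length ds"
  shows "iso C (\<phi> i)" "iso C (\<phi> (Suc i))" "Dom C (\<phi> i) = Dom C (ds ! i)" "Cod C (\<phi> i) = Dom C (es ! i)"
    "Dom C (\<phi> (Suc i)) = Cod C (ds ! i)" "Cod C (\<phi> (Suc i)) = Cod C (es ! i)"
    "ds ! i \<in> Mor C" "es ! i \<in> Mor C" "Comp C (es ! i) (\<phi> i) = Comp C (\<phi> (Suc i)) (ds ! i)"
  using assms unfolding via_def
  by (auto simp: dobj_lt dobj_Suc composable_mor)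

lemma via_sym: assumes "via ds es \<phi>" "composable C ds" "composable C es" "length ds = length es"
  shows "via es ds (\<lambda>i. inv (\<phi> i))"
  unfolding via_def
proof (intro conjI allI impI)
  fix i assume "i \<le> length es"
  then show "iso C (inv (\<phi> i))" "Dom C (inv (\<phi> i)) = dobj C es i" "Cod C (inv (\<phi> i)) = dobj C ds i"
    using assms iso_inv unfolding via_def by auto
next
  fix i assume i: "i < length es"
  note t = via_typing[OF assms, of i]
  show "Comp C (ds ! i) (inv (\<phi> i)) = Comp C (inv (\<phi> (Suc i))) (es ! i)"
    using transpose[of "\<phi> i" "\<phi> (Suc i)" "ds ! i" "es ! i"] t i assms(4) by simp
qed

lemma via_trans: assumes "via ds es \<phi>" "via es fs \<psi>" "composable C ds" "composable C es" "composable C fs"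
  "length ds = length es" "length es = length fs"
  shows "via ds fs (\<lambda>i. Comp C (\<psi> i) (\<phi> i))"
  unfolding via_def
proof (intro conjI allI impI)
  fix i assume "i \<le> length ds"
  then show "iso C (Comp C (\<psi> i) (\<phi> i))" "Dom C (Comp C (\<psi> i) (\<phi> i)) = dobj C ds i"
    "Cod C (Comp C (\<psi> i) (\<phi> i)) = dobj C fs i"
    using assms iso_comp unfolding via_def by auto
next
  fix i assume i: "i < length ds"
  note t = via_typing[OF assms(1,3,4,6) i]
  note u = via_typing[OF assms(2,4,5,7), of i]
  have "Comp C (fs ! i) (Comp C (\<psi> i) (\<phi> i)) = Comp C (Comp C (fs ! i) (\<psi> i)) (\<phi> i)"
    using t u i assms assoc[of "\<phi> i" "\<psi> i" "fs ! i"] by simp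
  also have "\<dots> = Comp C (Comp C (\<psi> (Suc i)) (es ! i)) (\<phi> i)" using u i assms by simp
  also have "\<dots> = Comp C (\<psi> (Suc i)) (Comp C (es ! i) (\<phi> i))"
    using t u i assms assoc[of "\<phi> i" "es ! i" "\<psi> (Suc i)"] by simp
  also have "\<dots> = Comp C (\<psi> (Suc i)) (Comp C (\<phi> (Suc i)) (ds ! i))" using t by simp
  also have "\<dots> = Comp C (Comp C (\<psi> (Suc i)) (\<phi> (Suc i))) (ds ! i)"
    using t u i assms assoc[of "ds ! i" "\<phi> (Suc i)" "\<psi> (Suc i)"] by simp
  finally show "Comp C (fs ! i) (Comp C (\<psi> i) (\<phi> i)) = Comp C (Comp C (\<psi> (Suc i)) (\<phi> (Suc i))) (ds ! i)" .
qed

lemma dec_iso_refl: "composable C ds \<Longrightarrow> ds \<noteq> [] \<Longrightarrow> dec_iso C ds ds"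
  unfolding dec_iso_via using via_refl by blast
lemma dec_iso_sym: assumes "dec_iso C ds es" shows "dec_iso C es ds"
proof -
  obtain \<phi> where "via ds es \<phi>" "length ds = length es" "composable C ds" "composable C es"
    using assms unfolding dec_iso_via by blast
  then show ?thesis unfolding dec_iso_via using via_sym[of ds es \<phi>] by auto
qed
lemma dec_iso_trans: assumes "dec_iso C ds es" "dec_iso C es fs" shows "dec_iso C ds fs"
proof -
  obtain \<phi> where "via ds es \<phi>" "length ds = length es" "composable C ds" "composable C es"
    using assms unfolding dec_iso_via by blast
  moreover obtain \<psi> where "via es fs \<psi>" "length es = length fs" "composable C fs"
    using assms unfolding dec_iso_via by blast
  ultimately show ?thesis unfolding dec_iso_via using via_trans[of ds es \<phi> fs \<psi>] by auto
qed

end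

context CC begin

lemma via_intro: "(\<And>i. i \<le> length ds \<Longrightarrow> iso C (\<phi> i) \<and> Dom C (\<phi> i) = dobj C ds i \<and> Cod C (\<phi> i) = dobj C es i) \<Longrightarrow>
  (\<And>i. i < length ds \<Longrightarrow> Comp C (es ! i) (\<phi> i) = Comp C (\<phi> (Suc i)) (ds ! i)) \<Longrightarrow> via ds es \<phi>"
  unfolding via_def by blast

lemma viaI: assumes "composable C ds" "composable C es" "length ds = length es" "ds \<noteq> []"
  "\<And>i. i < length ds \<Longrightarrow> iso C (\<phi> i) \<and> iso C (\<phi> (Suc i)) \<and> Dom C (\<phi> i) = Dom C (ds ! i) \<and> Cod C (\<phi> i) = Dom C (es ! i) \<and>
      Dom C (\<phi> (Suc i)) = Cod C (ds ! i) \<and> Cod C (\<phi> (Suc i)) = Cod C (es ! i) \<and>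
      Comp C (es ! i) (\<phi> i) = Comp C (\<phi> (Suc i)) (ds ! i)"
  shows "via ds es \<phi>"
proof (rule via_intro)
  fix i assume i: "i \<le> length ds"
  show "iso C (\<phi> i) \<and> Dom C (\<phi> i) = dobj C ds i \<and> Cod C (\<phi> i) = dobj C es i"
  proof (cases "i < length ds")
    case True then show ?thesis using assms(5)[OF True] dobj_lt assms(3) by simp
  next
    case False
    then obtain j where j: "i = Suc j" "j < length ds" using i assms(4) by (cases i) auto
    then show ?thesis using assms(5)[OF j(2)] dobj_Suc assms by simp
  qed
next
  fix i assume "i < length ds" then show "Comp C (es ! i) (\<phi> i) = Comp C (\<phi> (Suc i)) (ds ! i)" using assms(5) by blast
qed

lemma via_ends: assumes "via ds es \<phi>" "composable C ds" "composable C es" "length ds = length es" "ds \<noteq> []"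
  shows "iso C (\<phi> 0)" "Dom C (\<phi> 0) = Dom C (hd ds)" "Cod C (\<phi> 0) = Dom C (hd es)"
    "iso C (\<phi> (length ds))" "Dom C (\<phi> (length ds)) = Cod C (last ds)" "Cod C (\<phi> (length ds)) = Cod C (last es)"
proof -
  have ne: "es \<noteq> []" using assms by auto
  have a: "iso C (\<phi> 0) \<and> Dom C (\<phi> 0) = dobj C ds 0 \<and> Cod C (\<phi> 0) = dobj C es 0" using assms(1) unfolding via_def by blast
  have b: "iso C (\<phi> (length ds)) \<and> Dom C (\<phi> (length ds)) = dobj C ds (length ds) \<and> Cod C (\<phi> (length ds)) = dobj C es (length ds)"
    using assms(1) unfolding via_def by blast
  have c: "dobj C es (length ds) = Cod C (last es)" using assms(4) dobj_len[of es] by simp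
  show "iso C (\<phi> 0)" "Dom C (\<phi> 0) = Dom C (hd ds)" "Cod C (\<phi> 0) = Dom C (hd es)"
    "iso C (\<phi> (length ds))" "Dom C (\<phi> (length ds)) = Cod C (last ds)" "Cod C (\<phi> (length ds)) = Cod C (last es)"
    using a b c dobj_0[OF ne] dobj_0[OF assms(5)] dobj_len[of ds] by auto
qed

lemma via_split: assumes "via (xs @ ys) (xs' @ ys') \<phi>" "length xs = length xs'" "length ys = length ys'"
  "composable C (xs @ ys)" "composable C (xs' @ ys')" "xs \<noteq> []" "ys \<noteq> []"
  shows "via xs xs' \<phi>" "via ys ys' (\<lambda>i. \<phi> (length xs + i))"
proof -
  have ne: "xs' \<noteq> []" "ys' \<noteq> []" using assms by auto
  show "via xs xs' \<phi>"
  proof (rule via_intro)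
    fix i assume i: "i \<le> length xs"
    then show "iso C (\<phi> i) \<and> Dom C (\<phi> i) = dobj C xs i \<and> Cod C (\<phi> i) = dobj C xs' i"
      using assms(1) dobj_append1[OF assms(4,7) i assms(6)] dobj_append1[OF assms(5) ne(2) _ ne(1), of i] assms(2)
      unfolding via_def by auto
  next
    fix i assume i: "i < length xs"
    have "Comp C ((xs' @ ys') ! i) (\<phi> i) = Comp C (\<phi> (Suc i)) ((xs @ ys) ! i)"
      using assms(1) i unfolding via_def by auto
    then show "Comp C (xs' ! i) (\<phi> i) = Comp C (\<phi> (Suc i)) (xs ! i)"
      using i assms(2) by (simp add: nth_append)
  qed
  show "via ys ys' (\<lambda>i. \<phi> (length xs + i))"
  proof (rule via_intro)
    fix i assume i: "i \<le> length ys"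
    then show "iso C (\<phi> (length xs + i)) \<and> Dom C (\<phi> (length xs + i)) = dobj C ys i \<and> Cod C (\<phi> (length xs + i)) = dobj C ys' i"
      using assms(1) dobj_append2[OF assms(7), of xs i] dobj_append2[OF ne(2), of xs' i] assms(2)
      unfolding via_def by auto
  next
    fix i assume i: "i < length ys"
    have "Comp C ((xs' @ ys') ! (length xs + i)) (\<phi> (length xs + i)) = Comp C (\<phi> (Suc (length xs + i))) ((xs @ ys) ! (length xs + i))"
      using assms(1) i unfolding via_def by auto
    then show "Comp C (ys' ! i) (\<phi> (length xs + i)) = Comp C (\<phi> (length xs + Suc i)) (ys ! i)"
      using assms(2) by (simp add: nth_append)
  qed
qed

lemma via_glue: assumes "via xs xs' \<phi>" "via ys ys' \<psi>" "\<phi> (length xs) = \<psi> 0" "length xs = length xs'" "length ys = length ys'"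
  "composable C (xs @ ys)" "composable C (xs' @ ys')" "xs \<noteq> []" "ys \<noteq> []"
  shows "via (xs @ ys) (xs' @ ys') (\<lambda>i. if i \<le> length xs then \<phi> i else \<psi> (i - length xs))"
  (is "via _ _ ?f")
proof -
  have ne: "xs' \<noteq> []" "ys' \<noteq> []" using assms by auto
  have f2: "?f i = \<psi> (i - length xs)" if "length xs \<le> i" for i using that assms(3) by (cases "i = length xs") auto
  show ?thesis
  proof (rule via_intro)
    fix i assume i: "i \<le> length (xs @ ys)"
    show "iso C (?f i) \<and> Dom C (?f i) = dobj C (xs @ ys) i \<and> Cod C (?f i) = dobj C (xs' @ ys') i"
    proof (cases "i \<le> length xs")
      case True
      then show ?thesis using assms(1) dobj_append1[OF assms(6,9) True assms(8)] dobj_append1[OF assms(7) ne(2) _ ne(1), of i] assms(4)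
        unfolding via_def by auto
    next
      case False
      then obtain j where j: "i = length xs + j" "j \<le> length ys" using i by (metis le_add_diff_inverse length_append nat_le_linear add_le_cancel_left)
      then show ?thesis using False assms(2) dobj_append2[OF assms(9), of xs j] dobj_append2[OF ne(2), of xs' j] assms(4,5)
        unfolding via_def by auto
    qed
  next
    fix i assume i: "i < length (xs @ ys)"
    show "Comp C ((xs' @ ys') ! i) (?f i) = Comp C (?f (Suc i)) ((xs @ ys) ! i)"
    proof (cases "i < length xs")
      case True
      then show ?thesis using assms(1,4) unfolding via_def by (auto simp: nth_append)
    next
      case False
      then obtain j where j: "i = length xs + j" "j < length ys" using i by (metis le_add_diff_inverse length_append not_less add_less_cancel_left)
      have "Comp C (ys' ! j) (\<psi> j) = Comp C (\<psi> (Suc j)) (ys ! j)" using assms(2) j unfolding via_def by auto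
      then show ?thesis using j f2[of i] f2[of "Suc i"] assms(4) by (simp add: nth_append)
    qed
  qed
qed

lemma via_cl: assumes "via ds es \<phi>" "composable C ds" "composable C es" "length ds = length es" "ds \<noteq> []"
  shows "Comp C (cl es) (\<phi> 0) = Comp C (\<phi> (length ds)) (cl ds)"
  using assms
proof (induction ds arbitrary: es \<phi> rule: rev_induct)
  case Nil then show ?case by simp
next
  case (snoc x xs)
  obtain ys y where es: "es = ys @ [y]" using snoc(5) by (metis length_0_conv neq_Nil_conv rev_exhaust snoc_eq_iff_butlast)
  have ly: "length ys = length xs" using snoc(5) es by simp
  show ?case
  proof (cases "xs = []")
    case True
    then have "ys = []" using ly by simp
    then show ?thesis using snoc(2) True es unfolding via_def by auto
  next
    case False
    have ne: "ys \<noteq> []" using False ly by auto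
    have cx: "composable C xs" "x \<in> Mor C" "Cod C (last xs) = Dom C x" using snoc(3) False by (auto simp: composable_append)
    have cy: "composable C ys" "y \<in> Mor C" "Cod C (last ys) = Dom C y" using snoc(4) ne es by (auto simp: composable_append)
    have v1: "via xs ys \<phi>" and v2: "via [x] [y] (\<lambda>i. \<phi> (length xs + i))"
      using via_split[of xs "[x]" ys "[y]" \<phi>] snoc(2,3,4) es ly False by auto
    have IH: "Comp C (cl ys) (\<phi> 0) = Comp C (\<phi> (length xs)) (cl xs)" using snoc(1)[OF v1 cx(1) cy(1) ly[symmetric] False] .
    have sq: "Comp C y (\<phi> (length xs)) = Comp C (\<phi> (Suc (length xs))) x" using v2 unfolding via_def by auto
    note e1 = via_ends[OF v1 cx(1) cy(1) ly[symmetric] False]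
    note e2 = via_ends[OF v2] 
    have t: "iso C (\<phi> (Suc (length xs)))" "Dom C (\<phi> (Suc (length xs))) = Cod C x" "Cod C (\<phi> (Suc (length xs))) = Cod C y"
      using e2 cx(2) cy(2) by auto
    have "Comp C (cl (ys @ [y])) (\<phi> 0) = Comp C (Comp C y (cl ys)) (\<phi> 0)" using cl_snoc[OF ne] by simp
    also have "\<dots> = Comp C y (Comp C (cl ys) (\<phi> 0))" using assoc[of "\<phi> 0" "cl ys" y] e1 cy ne by simp
    also have "\<dots> = Comp C y (Comp C (\<phi> (length xs)) (cl xs))" using IH by simp
    also have "\<dots> = Comp C (Comp C y (\<phi> (length xs))) (cl xs)" using assoc[of "cl xs" "\<phi> (length xs)" y] e1 cy cx False by simp
    also have "\<dots> = Comp C (Comp C (\<phi> (Suc (length xs))) x) (cl xs)" using sq by simp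
    also have "\<dots> = Comp C (\<phi> (Suc (length xs))) (Comp C x (cl xs))" using assoc[of "cl xs" x "\<phi> (Suc (length xs))"] t cx False by simp
    also have "\<dots> = Comp C (\<phi> (length (xs @ [x]))) (cl (xs @ [x]))" using cl_snoc[OF False] by simp
    finally show ?thesis using es by simp
  qed
qed

lemma dec_iso_single: "dec_iso C [x] [y] \<longleftrightarrow> mor_iso C x y"
proof
  assume "dec_iso C [x] [y]"
  then obtain \<phi> where v: "via [x] [y] \<phi>" and m: "x \<in> Mor C" "y \<in> Mor C" unfolding dec_iso_via by auto
  show "mor_iso C x y"
    apply (rule mor_isoI[where a="\<phi> 0" and b="\<phi> 1"]) using v m unfolding via_def by (auto simp: dobj_def)
next
  assume "mor_iso C x y"
  then obtain a b where A: "x \<in> Mor C" "y \<in> Mor C" "iso C a" "iso C b"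
      "Dom C a = Dom C x" "Cod C a = Dom C y" "Dom C b = Cod C x" "Cod C b = Cod C y" "Comp C y a = Comp C b x"
    unfolding mor_iso_def by blast
  have "via [x] [y] (\<lambda>i. if i = 0 then a else b)" by (rule viaI) (use A in auto)
  then show "dec_iso C [x] [y]" unfolding dec_iso_via using A by auto
qed

lemma dec_iso_comp: assumes "dec_iso C ds es" "ds \<noteq> []" shows "mor_iso C (cl ds) (cl es)"
proof -
  obtain \<phi> where v: "via ds es \<phi>" "length ds = length es" "composable C ds" "composable C es"
    using assms unfolding dec_iso_via by blast
  have ne: "es \<noteq> []" using assms v by auto
  note e = via_ends[OF v(1,3,4,2) assms(2)]
  show ?thesis
    apply (rule mor_isoI[where a="\<phi> 0" and b="\<phi> (length ds)"])
    using e via_cl[OF v(1,3,4,2) assms(2)] v ne assms(2) by auto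
qed

lemma dec_iso_nth: assumes "dec_iso C ds es" "i < length ds" shows "mor_iso C (ds ! i) (es ! i)"
proof -
  obtain \<phi> where v: "via ds es \<phi>" "length ds = length es" "composable C ds" "composable C es"
    using assms unfolding dec_iso_via by blast
  note t = via_typing[OF v(1,3,4,2) assms(2)]
  show ?thesis by (rule mor_isoI[where a="\<phi> i" and b="\<phi> (Suc i)"]) (use t in auto)
qed

lemma dec_iso_nth_iso: "dec_iso C ds es \<Longrightarrow> i < length ds \<Longrightarrow> iso C (ds ! i) \<longleftrightarrow> iso C (es ! i)"
  using dec_iso_nth mor_iso_iso_iff by blast

lemma dec_iso_split: assumes "dec_iso C (xs @ ys) (xs' @ ys')" "length xs = length xs'" "xs \<noteq> []" "ys \<noteq> []"
  shows "dec_iso C xs xs'" "dec_iso C ys ys'" "dec_iso C [cl xs, cl ys] [cl xs', cl ys']"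
proof -
  obtain \<phi> where v: "via (xs@ys) (xs'@ys') \<phi>" "length (xs@ys) = length (xs'@ys')" "composable C (xs@ys)" "composable C (xs'@ys')"
    using assms unfolding dec_iso_via by blast
  have ly: "length ys = length ys'" using v(2) assms(2) by simp
  have ne: "xs' \<noteq> []" "ys' \<noteq> []" using assms ly by auto
  have c: "composable C xs" "composable C ys" "composable C xs'" "composable C ys'"
    "Cod C (last xs) = Dom C (hd ys)" "Cod C (last xs') = Dom C (hd ys')"
    using v(3,4) assms ne by (auto simp: composable_append)
  note s = via_split[OF v(1) assms(2) ly v(3,4) assms(3,4)]
  show "dec_iso C xs xs'" "dec_iso C ys ys'" using s c assms(2) ly unfolding dec_iso_via by auto
  note e1 = via_ends[OF s(1) c(1,3) assms(2,3)]
  note e2 = via_ends[OF s(2) c(2,4) ly assms(4)]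
  note q1 = via_cl[OF s(1) c(1,3) assms(2,3)]
  note q2 = via_cl[OF s(2) c(2,4) ly assms(4)]
  have "via [cl xs, cl ys] [cl xs', cl ys'] (\<lambda>i. if i = 0 then \<phi> 0 else if i = 1 then \<phi> (length xs) else \<phi> (length xs + length ys))"
    apply (rule viaI)
    using c assms ne e1 e2 q1 q2 by (auto simp: composable_Cons less_Suc_eq)
  then show "dec_iso C [cl xs, cl ys] [cl xs', cl ys']" unfolding dec_iso_via using c assms ne by (auto simp: composable_Cons)
qed

end

locale CF = CC + assumes fill: "iso_filling C"
begin

lemma filling: assumes "a1 \<in> Mor C" "b1 \<in> Mor C" "a2 \<in> Mor C" "b2 \<in> Mor C"
  "Dom C a1 = Dom C a2" "Cod C b1 = Cod C b2" "Cod C a1 = Dom C b1" "Cod C a2 = Dom C b2"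
  "Comp C b1 a1 = Comp C b2 a2" "iso C k" "Dom C k = Cod C a1" "Cod C k = Cod C a2"
  obtains h where "iso C h" "Dom C h = Cod C a1" "Cod C h = Cod C a2" "Comp C h a1 = a2" "Comp C b2 h = b1"
proof -
  have "iso_obj C (Cod C a1) (Cod C a2)" using assms unfolding iso_obj_def by blast
  then show ?thesis using fill assms that unfolding iso_filling_def by blast
qed

lemma adjust: "dec_iso C ds es \<Longrightarrow> ds \<noteq> [] \<Longrightarrow> iso C \<alpha> \<Longrightarrow> iso C \<beta> \<Longrightarrow> Dom C \<alpha> = Dom C (hd ds) \<Longrightarrow>
  Cod C \<alpha> = Dom C (hd es) \<Longrightarrow> Dom C \<beta> = Cod C (last ds) \<Longrightarrow> Cod C \<beta> = Cod C (last es) \<Longrightarrow>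
  Comp C (cl es) \<alpha> = Comp C \<beta> (cl ds) \<Longrightarrow> \<exists>\<phi>. via ds es \<phi> \<and> \<phi> 0 = \<alpha> \<and> \<phi> (length ds) = \<beta>"
proof (induction ds arbitrary: es \<alpha>)
  case Nil then show ?case by simp
next
  case (Cons x xs)
  obtain \<psi> where v: "via (x#xs) es \<psi>" "length (x#xs) = length es" "composable C (x#xs)" "composable C es"
    using Cons.prems(1) unfolding dec_iso_via by blast
  obtain y ys where es: "es = y # ys" using v(2) by (cases es) auto
  have ly: "length xs = length ys" using v(2) es by simp
  show ?case
  proof (cases "xs = []")
    case True
    then have ys: "ys = []" using ly by simp
    have "via [x] [y] (\<lambda>i. if i = 0 then \<alpha> else \<beta>)"
      by (rule viaI) (use Cons.prems v True ys es in auto)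
    then show ?thesis using True ys es by auto
  next
    case False
    have ne: "ys \<noteq> []" using False ly by auto
    have cx: "x \<in> Mor C" "composable C xs" "Cod C x = Dom C (hd xs)" using v(3) False by (auto simp: composable_Cons)
    have cy: "y \<in> Mor C" "composable C ys" "Cod C y = Dom C (hd ys)" using v(4) ne es by (auto simp: composable_Cons)
    have vs: "via [x] [y] \<psi>" "via xs ys (\<lambda>i. \<psi> (1 + i))"
      using via_split[of "[x]" xs "[y]" ys \<psi>] v es ly False by auto
    have k: "iso C (\<psi> 1)" "Dom C (\<psi> 1) = Cod C x" "Cod C (\<psi> 1) = Cod C y"
      using via_typing[OF vs(1), of 0] cx cy by auto
    have lx: "last (x # xs) = last xs" "last es = last ys" using False ne es by auto
    have eq: "Comp C (Comp C \<beta> (cl xs)) x = Comp C (cl ys) (Comp C y \<alpha>)"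
    proof -
      have "Comp C (Comp C \<beta> (cl xs)) x = Comp C \<beta> (Comp C (cl xs) x)"
        using assoc[of x "cl xs" \<beta>] cx False Cons.prems lx by simp
      also have "\<dots> = Comp C \<beta> (cl (x # xs))" using cl_Cons[OF v(3) False] by simp
      also have "\<dots> = Comp C (cl es) \<alpha>" using Cons.prems by simp
      also have "\<dots> = Comp C (Comp C (cl ys) y) \<alpha>" using cl_Cons[of y ys] v(4) es ne by simp
      also have "\<dots> = Comp C (cl ys) (Comp C y \<alpha>)"
        using assoc[of \<alpha> y "cl ys"] cy ne Cons.prems es by simp
      finally show ?thesis .
    qed
    obtain h where h: "iso C h" "Dom C h = Cod C x" "Cod C h = Cod C (Comp C y \<alpha>)" "Comp C h x = Comp C y \<alpha>"
      "Comp C (cl ys) h = Comp C \<beta> (cl xs)"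
      apply (rule filling[of x "Comp C \<beta> (cl xs)" "Comp C y \<alpha>" "cl ys" "\<psi> 1"])
      using cx cy Cons.prems es lx ne False eq k by auto
    have dxy: "dec_iso C xs ys" using vs(2) cx cy ly unfolding dec_iso_via by blast
    obtain \<phi> where \<phi>: "via xs ys \<phi>" "\<phi> 0 = h" "\<phi> (length xs) = \<beta>"
      using Cons.IH[OF dxy False h(1) Cons.prems(4)] h cx cy Cons.prems es lx by auto
    have v1: "via [x] [y] (\<lambda>i. if i = 0 then \<alpha> else h)"
      by (rule viaI) (use Cons.prems h cx cy es in auto)
    have "via ([x] @ xs) ([y] @ ys) (\<lambda>i. if i \<le> length [x] then (if i = 0 then \<alpha> else h) else \<phi> (i - length [x]))"
      by (rule via_glue[OF v1 \<phi>(1)]) (use \<phi> v es ly False in auto)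
    then show ?thesis using es \<phi> False by (intro exI[of _ "(\<lambda>i. if i \<le> length [x] then (if i = 0 then \<alpha> else h) else \<phi> (i - length [x]))"]) auto
  qed
qed

lemma dec_iso_glue: assumes "composable C (xs @ ys)" "composable C (xs' @ ys')" "xs \<noteq> []" "ys \<noteq> []"
  "dec_iso C xs xs'" "dec_iso C ys ys'" "dec_iso C [cl xs, cl ys] [cl xs', cl ys']"
  shows "dec_iso C (xs @ ys) (xs' @ ys')"
proof -
  have lx: "length xs = length xs'" "length ys = length ys'" using assms unfolding dec_iso_via by auto
  have ne: "xs' \<noteq> []" "ys' \<noteq> []" using assms lx by auto
  have c: "composable C xs" "composable C ys" "composable C xs'" "composable C ys'"
    "Cod C (last xs) = Dom C (hd ys)" "Cod C (last xs') = Dom C (hd ys')"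
    using assms ne by (auto simp: composable_append)
  obtain \<phi> where v: "via [cl xs, cl ys] [cl xs', cl ys'] \<phi>" using assms(7) unfolding dec_iso_via by blast
  have cc: "composable C [cl xs, cl ys]" "composable C [cl xs', cl ys']" using c assms ne by (auto simp: composable_Cons)
  note t0 = via_typing[OF v cc, of 0] and t1 = via_typing[OF v cc, of 1]
  obtain \<psi>1 where p1: "via xs xs' \<psi>1" "\<psi>1 0 = \<phi> 0" "\<psi>1 (length xs) = \<phi> 1"
    using adjust[OF assms(5,3), of "\<phi> 0" "\<phi> 1"] t0 c assms ne by auto
  obtain \<psi>2 where p2: "via ys ys' \<psi>2" "\<psi>2 0 = \<phi> 1" "\<psi>2 (length ys) = \<phi> 2"
    using adjust[OF assms(6,4), of "\<phi> 1" "\<phi> 2"] t1 c assms ne by (auto simp: numeral_2_eq_2)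
  have "via (xs @ ys) (xs' @ ys') (\<lambda>i. if i \<le> length xs then \<psi>1 i else \<psi>2 (i - length xs))"
    by (rule via_glue[OF p1(1) p2(1)]) (use p1 p2 lx assms in auto)
  then show ?thesis unfolding dec_iso_via using assms lx by auto
qed

end

definition rep :: "'m list set \<Rightarrow> 'm list" where "rep D = (SOME ds. ds \<in> D)"

context CC begin

lemma dclass_eq: "dec_iso C ds es \<Longrightarrow> dclass C ds = dclass C es"
  unfolding dclass_def using dec_iso_sym dec_iso_trans by blast

lemma dclass_self: "composable C ds \<Longrightarrow> ds \<noteq> [] \<Longrightarrow> ds \<in> dclass C ds"
  unfolding dclass_def using dec_iso_refl by simp

lemma dclass_eq_iff: assumes "composable C ds" "ds \<noteq> []" shows "dclass C ds = dclass C es \<longleftrightarrow> dec_iso C ds es"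
proof
  assume "dclass C ds = dclass C es"
  then have "ds \<in> dclass C es" using dclass_self[OF assms] by simp
  then show "dec_iso C ds es" unfolding dclass_def using dec_iso_sym by simp
qed (rule dclass_eq)

lemma rep_dclass: assumes "composable C ds" "ds \<noteq> []" shows "dec_iso C ds (rep (dclass C ds))"
proof -
  have "rep (dclass C ds) \<in> dclass C ds" unfolding rep_def using dclass_self[OF assms] by (rule someI)
  then show ?thesis unfolding dclass_def by simp
qed

lemma dclass_rep: assumes "composable C ds" "ds \<noteq> []" shows "dclass C (rep (dclass C ds)) = dclass C ds"
  using dclass_eq[OF rep_dclass[OF assms]] by simp

lemma cls_closed: "c \<in> Cbar1 C \<Longrightarrow> g \<in> c \<Longrightarrow> mor_iso C g h \<Longrightarrow> h \<in> c"
  unfolding Cbar1_def mclass_def using mor_iso_trans by blast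

lemma cls_mor: "c \<in> Cbar1 C \<Longrightarrow> g \<in> c \<Longrightarrow> g \<in> Mor C"
  unfolding Cbar1_def mclass_def using mor_iso_mor by blast

lemma mclass_cls: "f \<in> Mor C \<Longrightarrow> mclass C f \<in> Cbar1 C" unfolding Cbar1_def by simp

lemma decomps_ne: "ds \<in> decomps C n c \<Longrightarrow> 1 \<le> n \<Longrightarrow> ds \<noteq> []" unfolding decomps_def by auto

lemma decomps_closed: assumes "c \<in> Cbar1 C" "ds \<in> decomps C n c" "1 \<le> n" "dec_iso C ds es" shows "es \<in> decomps C n c"
proof -
  have "mor_iso C (cl ds) (cl es)" using dec_iso_comp[OF assms(4) decomps_ne[OF assms(2,3)]] .
  moreover have "cl ds \<in> c" "length ds = n" using assms(2) unfolding decomps_def by auto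
  ultimately have "cl es \<in> c" using cls_closed[OF assms(1)] by blast
  then show ?thesis using assms(4) \<open>length ds = n\<close> unfolding decomps_def dec_iso_via by auto
qed

lemma Dbar_elim: assumes "c \<in> Cbar1 C" "D \<in> Dbar C n c" "1 \<le> n"
  shows "rep D \<in> decomps C n c" "D = dclass C (rep D)" "composable C (rep D)" "rep D \<noteq> []" "length (rep D) = n"
proof -
  obtain ds where ds: "ds \<in> decomps C n c" "D = dclass C ds" using assms unfolding Dbar_def by blast
  have c: "composable C ds" "ds \<noteq> []" using ds assms decomps_ne unfolding decomps_def by auto
  have d: "dec_iso C ds (rep D)" using rep_dclass[OF c] ds by simp
  then show r: "rep D \<in> decomps C n c" using decomps_closed[OF assms(1) ds(1) assms(3)] by blast
  show "D = dclass C (rep D)" using dclass_eq[OF d] ds(2) by simp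
  show "composable C (rep D)" "length (rep D) = n" using r unfolding decomps_def by auto
  show "rep D \<noteq> []" using decomps_ne[OF r assms(3)] .
qed

lemma Dbar_intro: "ds \<in> decomps C n c \<Longrightarrow> dclass C ds \<in> Dbar C n c" unfolding Dbar_def by simp

lemma rep_dec_iso: assumes "c \<in> Cbar1 C" "ds \<in> decomps C n c" "1 \<le> n" shows "dec_iso C ds (rep (dclass C ds))"
  using rep_dclass assms decomps_ne unfolding decomps_def by auto

lemma Dbar1: assumes "f \<in> Mor C" shows "Dbar C 1 (mclass C f) = {dclass C [f]}"
proof
  show "Dbar C 1 (mclass C f) \<subseteq> {dclass C [f]}"
  proof
    fix D assume "D \<in> Dbar C 1 (mclass C f)"
    then obtain ds where ds: "ds \<in> decomps C 1 (mclass C f)" "D = dclass C ds" unfolding Dbar_def by blast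
    then obtain g where g: "ds = [g]" unfolding decomps_def by (auto simp: length_Suc_conv)
    then have "mor_iso C f g" using ds unfolding decomps_def in_mclass by simp
    then have "dclass C [g] = dclass C [f]" using dclass_eq[of "[f]" "[g]"] dec_iso_single by simp
    then show "D \<in> {dclass C [f]}" using ds g by simp
  qed
  have "[f] \<in> decomps C 1 (mclass C f)" unfolding decomps_def using assms mor_iso_refl in_mclass by simp
  then show "{dclass C [f]} \<subseteq> Dbar C 1 (mclass C f)" using Dbar_intro by simp
qed

definition mf :: "'m \<Rightarrow> 'm list \<Rightarrow> 'm list" where "mf h es = Comp C (hd es) h # tl es"

lemma mf_props: assumes "composable C es" "es \<noteq> []" "iso C h" "Cod C h = Dom C (hd es)"
  shows "composable C (mf h es)" "mf h es \<noteq> []" "length (mf h es) = length es"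
    "dec_iso C es (mf h es)" "cl (mf h es) = Comp C (cl es) h" "Dom C (hd (mf h es)) = Dom C h"
    "last (mf h es) = (if tl es = [] then Comp C (hd es) h else last es)"
proof -
  obtain z zs where es: "es = z # zs" using assms by (cases es) auto
  have cz: "z \<in> Mor C" "composable C zs" "zs \<noteq> [] \<longrightarrow> Cod C z = Dom C (hd zs)" using assms es by (auto simp: composable_Cons)
  have hz: "Cod C h = Dom C z" using assms es by simp
  show c: "composable C (mf h es)" unfolding mf_def using cz assms es by (auto simp: composable_Cons)
  show "mf h es \<noteq> []" "length (mf h es) = length es" "Dom C (hd (mf h es)) = Dom C h"
    "last (mf h es) = (if tl es = [] then Comp C (hd es) h else last es)"
    unfolding mf_def using es cz hz assms by auto
  show "cl (mf h es) = Comp C (cl es) h"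
  proof (cases "zs = []")
    case True then show ?thesis unfolding mf_def using es by simp
  next
    case False
    have "cl (mf h es) = Comp C (cl zs) (Comp C z h)" unfolding mf_def using cl_Cons c False es unfolding mf_def by simp
    also have "\<dots> = Comp C (Comp C (cl zs) z) h" using assoc[of h z "cl zs"] cz False assms hz by simp
    also have "\<dots> = Comp C (cl es) h" using cl_Cons[of z zs] assms es False by simp
    finally show ?thesis .
  qed
  have "via es (mf h es) (\<lambda>i. if i = 0 then inv h else Idm C (dobj C es i))"
  proof (rule viaI[OF assms(1) c])
    show "length es = length (mf h es)" "es \<noteq> []" unfolding mf_def using es by auto
    fix i assume i: "i < length es"
    show "iso C (if i = 0 then inv h else Idm C (dobj C es i)) \<and> iso C (if Suc i = 0 then inv h else Idm C (dobj C es (Suc i))) \<and>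
         Dom C (if i = 0 then inv h else Idm C (dobj C es i)) = Dom C (es ! i) \<and>
         Cod C (if i = 0 then inv h else Idm C (dobj C es i)) = Dom C (mf h es ! i) \<and>
         Dom C (if Suc i = 0 then inv h else Idm C (dobj C es (Suc i))) = Cod C (es ! i) \<and>
         Cod C (if Suc i = 0 then inv h else Idm C (dobj C es (Suc i))) = Cod C (mf h es ! i) \<and>
         Comp C (mf h es ! i) (if i = 0 then inv h else Idm C (dobj C es i)) =
         Comp C (if Suc i = 0 then inv h else Idm C (dobj C es (Suc i))) (es ! i)"
    proof (cases i)
      case 0
      have "Comp C (Comp C z h) (inv h) = Comp C z (Comp C h (inv h))" using assoc[of "inv h" h z] assms hz cz by simp
      also have "\<dots> = z" using assms hz cz by simp
      finally have e: "Comp C (Comp C z h) (inv h) = z" .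
      show ?thesis using 0 es i e assms hz cz dobj_Suc[OF assms(1), of 0] iso_inv iso_id cod_ob unfolding mf_def by auto
    next
      case (Suc j)
      have m: "es ! i \<in> Mor C" using composable_mor assms(1) i by blast
      have "mf h es ! i = es ! i" unfolding mf_def using Suc es by simp
      then show ?thesis using Suc i m dobj_lt dobj_Suc[OF assms(1) i] iso_id dom_ob cod_ob by auto
    qed
  qed
  then show "dec_iso C es (mf h es)" unfolding dec_iso_via using assms c unfolding mf_def by auto
qed

end

context CC begin

lemma td: assumes "composable C t" "length t = k + l" "1 \<le> k" "1 \<le> l"
  shows "take k t \<noteq> []" "drop k t \<noteq> []" "composable C (take k t)" "composable C (drop k t)"
    "length (take k t) = k" "length (drop k t) = l" "take k t @ drop k t = t"
    "Cod C (last (take k t)) = Dom C (hd (drop k t))" "cl t = Comp C (cl (drop k t)) (cl (take k t))"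
    "composable C [cl (take k t), cl (drop k t)]" "cl [cl (take k t), cl (drop k t)] = cl t"
proof -
  have t: "t = take k t @ drop k t" by simp
  show "take k t \<noteq> []" "drop k t \<noteq> []" "length (take k t) = k" "length (drop k t) = l" "take k t @ drop k t = t"
    using assms by auto
  have X: "composable C (take k t @ drop k t)" using assms by simp
  note Y = X[unfolded composable_append]
  show c: "composable C (take k t)" "composable C (drop k t)" "Cod C (last (take k t)) = Dom C (hd (drop k t))"
    using Y \<open>take k t \<noteq> []\<close> \<open>drop k t \<noteq> []\<close> by blast+
  show e: "cl t = Comp C (cl (drop k t)) (cl (take k t))"
    using cl_append[of "take k t" "drop k t"] assms \<open>take k t \<noteq> []\<close> \<open>drop k t \<noteq> []\<close> by simp
  show "composable C [cl (take k t), cl (drop k t)]" using c \<open>take k t \<noteq> []\<close> \<open>drop k t \<noteq> []\<close> by (auto simp: composable_Cons)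
  then show "cl [cl (take k t), cl (drop k t)] = cl t" using e cl_Cons[of "cl (take k t)" "[cl (drop k t)]"] by simp
qed

end

context CF begin

definition split_map where
  "split_map k T = (dclass C [cl (take k (rep T)), cl (drop k (rep T))], dclass C (take k (rep T)), dclass C (drop k (rep T)))"

definition SS where
  "SS k l c = (SIGMA D:Dbar C 2 c. Dbar C k (mclass C (rep D ! 0)) \<times> Dbar C l (mclass C (rep D ! 1)))"

lemma split_into: assumes "c \<in> Cbar1 C" "1 \<le> k" "1 \<le> l" "T \<in> Dbar C (k+l) c"
  shows "split_map k T \<in> SS k l c"
proof -
  let ?t = "rep T"
  have t: "?t \<in> decomps C (k+l) c" "composable C ?t" "length ?t = k + l" using Dbar_elim[OF assms(1,4)] assms by auto
  note d = td[OF t(2,3) assms(2,3)]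
  let ?p = "[cl (take k ?t), cl (drop k ?t)]"
  have p: "?p \<in> decomps C 2 c" using d t unfolding decomps_def by simp
  let ?r = "rep (dclass C ?p)"
  have pr: "dec_iso C ?p ?r" using rep_dec_iso[OF assms(1) p] by simp
  have m0: "mor_iso C (?r ! 0) (cl (take k ?t))" using dec_iso_nth[OF pr, of 0] mor_iso_sym by simp
  have m1: "mor_iso C (?r ! 1) (cl (drop k ?t))" using dec_iso_nth[OF pr, of 1] mor_iso_sym by simp
  have "take k ?t \<in> decomps C k (mclass C (?r ! 0))" using m0 d unfolding decomps_def in_mclass by simp
  moreover have "drop k ?t \<in> decomps C l (mclass C (?r ! 1))" using m1 d unfolding decomps_def in_mclass by simp
  ultimately show ?thesis unfolding split_map_def SS_def using Dbar_intro[OF p] Dbar_intro by auto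
qed

lemma split_inj: assumes "c \<in> Cbar1 C" "1 \<le> k" "1 \<le> l"
  shows "inj_on (split_map k) (Dbar C (k+l) c)"
proof (rule inj_onI)
  fix T T' assume T: "T \<in> Dbar C (k+l) c" and T': "T' \<in> Dbar C (k+l) c" and eq: "split_map k T = split_map k T'"
  let ?t = "rep T" and ?t' = "rep T'"
  have t: "composable C ?t" "length ?t = k + l" "T = dclass C ?t" using Dbar_elim[OF assms(1) T] assms by auto
  have t': "composable C ?t'" "length ?t' = k + l" "T' = dclass C ?t'" using Dbar_elim[OF assms(1) T'] assms by auto
  note d = td[OF t(1,2) assms(2,3)] and d' = td[OF t'(1,2) assms(2,3)]
  have e: "dclass C [cl (take k ?t), cl (drop k ?t)] = dclass C [cl (take k ?t'), cl (drop k ?t')]"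
     "dclass C (take k ?t) = dclass C (take k ?t')" "dclass C (drop k ?t) = dclass C (drop k ?t')"
    using eq unfolding split_map_def by auto
  have i1: "dec_iso C [cl (take k ?t), cl (drop k ?t)] [cl (take k ?t'), cl (drop k ?t')]"
    using e(1) dclass_eq_iff[of "[cl (take k ?t), cl (drop k ?t)]"] d by simp
  have i2: "dec_iso C (take k ?t) (take k ?t')" using e(2) dclass_eq_iff d by simp
  have i3: "dec_iso C (drop k ?t) (drop k ?t')" using e(3) dclass_eq_iff d by simp
  have "dec_iso C (take k ?t @ drop k ?t) (take k ?t' @ drop k ?t')"
    by (rule dec_iso_glue) (use d d' i1 i2 i3 t t' in auto)
  then have tt: "dec_iso C ?t ?t'" by simp
  show "T = T'" using dclass_eq[OF tt] t(3) t'(3) by simp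
qed

lemma split_onto: assumes "c \<in> Cbar1 C" "1 \<le> k" "1 \<le> l" "X \<in> SS k l c"
  shows "X \<in> split_map k ` Dbar C (k+l) c"
proof -
  obtain D E1 E2 where X: "X = (D, E1, E2)" "D \<in> Dbar C 2 c" "E1 \<in> Dbar C k (mclass C (rep D ! 0))"
    "E2 \<in> Dbar C l (mclass C (rep D ! 1))" using assms(4) unfolding SS_def by auto
  let ?r = "rep D"
  have r: "?r \<in> decomps C 2 c" "D = dclass C ?r" "composable C ?r" "length ?r = 2" using Dbar_elim[OF assms(1) X(2)] by auto
  have r01: "?r ! 0 \<in> Mor C" "?r ! 1 \<in> Mor C" "Cod C (?r ! 0) = Dom C (?r ! 1)"
    using r composable_mor composable_link[of ?r 0] by auto
  have c0: "mclass C (?r ! 0) \<in> Cbar1 C" "mclass C (?r ! 1) \<in> Cbar1 C" using r01 mclass_cls by auto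
  let ?e1 = "rep E1" and ?e2 = "rep E2"
  have e1: "?e1 \<in> decomps C k (mclass C (?r ! 0))" "E1 = dclass C ?e1" "composable C ?e1" "?e1 \<noteq> []" "length ?e1 = k"
    using Dbar_elim[OF c0(1) X(3) assms(2)] by auto
  have e2: "?e2 \<in> decomps C l (mclass C (?r ! 1))" "E2 = dclass C ?e2" "composable C ?e2" "?e2 \<noteq> []" "length ?e2 = l"
    using Dbar_elim[OF c0(2) X(4) assms(3)] by auto
  have "mor_iso C (?r ! 0) (cl ?e1)" using e1 unfolding decomps_def in_mclass by simp
  then obtain a1 b1 where A: "iso C a1" "iso C b1"
      "Dom C a1 = Dom C (?r ! 0)" "Cod C a1 = Dom C (cl ?e1)" "Dom C b1 = Cod C (?r ! 0)" "Cod C b1 = Cod C (cl ?e1)"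
      "Comp C (cl ?e1) a1 = Comp C b1 (?r ! 0)"
    unfolding mor_iso_def by blast
  have "mor_iso C (?r ! 1) (cl ?e2)" using e2 unfolding decomps_def in_mclass by simp
  then obtain a2 b2 where B: "iso C a2" "iso C b2"
      "Dom C a2 = Dom C (?r ! 1)" "Cod C a2 = Dom C (cl ?e2)" "Dom C b2 = Cod C (?r ! 1)" "Cod C b2 = Cod C (cl ?e2)"
      "Comp C (cl ?e2) a2 = Comp C b2 (?r ! 1)"
    unfolding mor_iso_def by blast
  let ?h = "Comp C a2 (inv b1)"
  have h: "iso C ?h" "Dom C ?h = Cod C (cl ?e1)" "Cod C ?h = Dom C (hd ?e2)"
    using A B r01 iso_comp iso_inv e2 by auto
  note M = mf_props[OF e2(3,4) h(1,3)]
  let ?t = "?e1 @ mf ?h ?e2"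
  have ct: "composable C ?t" using e1 M h by (auto simp: composable_append)
  have lt: "length ?t = k + l" using e1 e2 M by simp
  note d = td[OF ct lt assms(2,3)]
  have tk: "take k ?t = ?e1" "drop k ?t = mf ?h ?e2" using e1 by auto
  have clmf: "Comp C (cl (mf ?h ?e2)) b1 = Comp C b2 (?r ! 1)"
  proof -
    have "Comp C (cl (mf ?h ?e2)) b1 = Comp C (Comp C (cl ?e2) ?h) b1" using M by simp
    also have "\<dots> = Comp C (cl ?e2) (Comp C ?h b1)" using assoc[of b1 ?h "cl ?e2"] h A e2 by simp
    also have "\<dots> = Comp C (cl ?e2) (Comp C a2 (Comp C (inv b1) b1))" using assoc[of b1 "inv b1" a2] A B r01 by simp
    also have "\<dots> = Comp C (cl ?e2) a2" using A B r01 by simp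
    finally show ?thesis using B by simp
  qed
  have pr: "dec_iso C ?r [cl ?e1, cl (mf ?h ?e2)]"
  proof -
    have "via ?r [cl ?e1, cl (mf ?h ?e2)] (\<lambda>i. if i = 0 then a1 else if i = 1 then b1 else b2)"
      apply (rule viaI)
      using r d tk A B M h clmf r01 e1 e2 by (auto simp: less_Suc_eq numeral_2_eq_2)
    then show ?thesis unfolding dec_iso_via using r d tk by auto
  qed
  have tdec: "?t \<in> decomps C (k+l) c"
  proof -
    have "?r \<noteq> []" using r(4) by auto
    then have m: "mor_iso C (cl ?r) (cl [cl ?e1, cl (mf ?h ?e2)])" using dec_iso_comp[OF pr] by blast
    have q: "cl [cl ?e1, cl (mf ?h ?e2)] = cl ?t" using d(11) tk by simp
    have "cl ?r \<in> c" using r unfolding decomps_def by simp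
    then have "cl [cl ?e1, cl (mf ?h ?e2)] \<in> c" using cls_closed[OF assms(1) _ m] by blast
    then have "cl ?t \<in> c" using q by simp
    then show ?thesis unfolding decomps_def using ct lt by simp
  qed
  let ?T = "dclass C ?t"
  have T: "?T \<in> Dbar C (k+l) c" using Dbar_intro[OF tdec] .
  let ?t' = "rep ?T"
  have tt: "dec_iso C ?t ?t'" using rep_dec_iso[OF assms(1) tdec] assms by simp
  have t': "composable C ?t'" "length ?t' = k + l" using Dbar_elim[OF assms(1) T] assms by auto
  note d' = td[OF t'(1,2) assms(2,3)]
  have sp: "dec_iso C (take k ?t) (take k ?t')" "dec_iso C (drop k ?t) (drop k ?t')"
     "dec_iso C [cl (take k ?t), cl (drop k ?t)] [cl (take k ?t'), cl (drop k ?t')]"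
    using dec_iso_split[of "take k ?t" "drop k ?t" "take k ?t'" "drop k ?t'"] tt d d' by auto
  have "dclass C [cl (take k ?t'), cl (drop k ?t')] = D"
  proof -
    have "dec_iso C ?r [cl (take k ?t'), cl (drop k ?t')]" using dec_iso_trans[OF pr] sp(3) tk by simp
    note q = this
    show ?thesis using dclass_eq[OF q] r(2) by simp
  qed
  moreover have "dclass C (take k ?t') = E1" using dclass_eq[OF sp(1)] tk e1 by simp
  moreover have "dclass C (drop k ?t') = E2"
  proof -
    have "dec_iso C ?e2 (drop k ?t')" using dec_iso_trans[OF M(4)] sp(2) tk by simp
    note q = this
    show ?thesis using dclass_eq[OF q] e2(2) by simp
  qed
  ultimately have "split_map k ?T = X" unfolding split_map_def using X by simp
  then show ?thesis using T by force
qed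

lemma split_bij: assumes "c \<in> Cbar1 C" "1 \<le> k" "1 \<le> l"
  shows "bij_betw (split_map k) (Dbar C (k+l) c) (SS k l c)"
  unfolding bij_betw_def using split_inj[OF assms] split_into[OF assms] split_onto[OF assms] by blast

end

locale CE = CF + assumes ef: "ess_finite_decomp C"
begin

lemma Sigma_fin: "c \<in> Cbar1 C \<Longrightarrow> finite (SIGMA n:{1..}. PDbar C n c)"
  using ef unfolding ess_finite_decomp_def by blast

lemma iso_factors: assumes "f \<in> Mor C" "g \<in> Mor C" "Cod C f = Dom C g" "iso C (Comp C g f)"
  shows "iso C f \<and> iso C g"
proof (rule ccontr)
  assume nb: "\<not> (iso C f \<and> iso C g)"
  let ?u = "Comp C g f" let ?x = "Dom C f"
  let ?g = "Comp C (inv ?u) g"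
  have u: "?u \<in> Mor C" "Dom C ?u = ?x" "Cod C ?u = Cod C g" using assms by auto
  have ix: "?x \<in> Ob C" using assms dom_ob by simp
  have g': "?g \<in> Mor C" "Dom C ?g = Dom C g" "Cod C ?g = ?x" using assms u by auto
  have gf: "Comp C ?g f = Idm C ?x"
  proof -
    have "Comp C ?g f = Comp C (inv ?u) ?u" using assoc[of f g "inv ?u"] assms u by simp
    then show ?thesis using assms u by simp
  qed
  have nf: "\<not> iso C f" using nb iso_cancel_r[of f g] assms by blast
  have ng: "\<not> iso C ?g"
  proof
    assume "iso C ?g"
    then have "iso C f" using iso_cancel_l[of ?g f] g' assms gf iso_id ix by simp
    then show False using nf by simp
  qed
  define L where "L k = concat (replicate (Suc k) [f, ?g])" for k
  have L: "L k \<noteq> [] \<and> hd (L k) = f \<and> last (L k) = ?g \<and> composable C (L k) \<and> cl (L k) = Idm C ?x \<and>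
     length (L k) = 2 * Suc k \<and> set (L k) = {f, ?g}" for k
  proof (induction k)
    case 0
    have c: "composable C [f, ?g]" using assms g' by (simp add: composable_Cons)
    then show ?case unfolding L_def using cl_Cons[OF c] gf by simp
  next
    case (Suc k)
    have e: "L (Suc k) = [f, ?g] @ L k" unfolding L_def by simp
    have c: "composable C [f, ?g]" using assms g' by (simp add: composable_Cons)
    have c2: "composable C ([f, ?g] @ L k)" using Suc c g' unfolding composable_append by simp
    have "cl ([f, ?g] @ L k) = Comp C (cl (L k)) (cl [f, ?g])" using cl_append[OF c2] Suc by simp
    also have "\<dots> = Idm C ?x" using Suc cl_Cons[OF c] gf ix by simp
    finally have cle: "cl (L (Suc k)) = Idm C ?x" using e by simp
    show ?case unfolding e using c2 Suc.IH cle[unfolded e] by (simp del: comp_list.simps) blast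
  qed
  let ?c = "mclass C (Idm C ?x)"
  have cc: "?c \<in> Cbar1 C" using mclass_cls ix by simp
  have "(2 * Suc k, dclass C (L k)) \<in> (SIGMA n:{1..}. PDbar C n ?c)" for k
  proof -
    have "L k \<in> decomps C (2 * Suc k) ?c" unfolding decomps_def using L[of k] mor_iso_refl ix in_mclass by simp
    moreover have "\<forall>i<2 * Suc k. \<not> iso C (L k ! i)"
    proof (intro allI impI)
      fix i assume "i < 2 * Suc k"
      then have "L k ! i \<in> {f, ?g}" using L[of k] nth_mem by metis
      then show "\<not> iso C (L k ! i)" using nf ng by auto
    qed
    ultimately show ?thesis unfolding PDbar_def by auto
  qed
  then have "range (\<lambda>k. 2 * Suc k) \<subseteq> fst ` (SIGMA n:{1..}. PDbar C n ?c)" by force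
  moreover have "finite (fst ` (SIGMA n:{1..}. PDbar C n ?c))" using Sigma_fin[OF cc] by simp
  ultimately have "finite (range (\<lambda>k::nat. 2 * Suc k))" using finite_subset by blast
  moreover have "inj (\<lambda>k::nat. 2 * Suc k)" by (rule injI) simp
  ultimately show False using finite_imageD by fastforce
qed

lemma iso_cl: "composable C ds \<Longrightarrow> ds \<noteq> [] \<Longrightarrow> iso C (cl ds) \<Longrightarrow> i < length ds \<Longrightarrow> iso C (ds ! i)"
proof (induction ds arbitrary: i)
  case Nil then show ?case by simp
next
  case (Cons x xs)
  show ?case
  proof (cases "xs = []")
    case True then show ?thesis using Cons by simp
  next
    case False
    have c: "x \<in> Mor C" "composable C xs" "Cod C x = Dom C (hd xs)" using Cons.prems False by (auto simp: composable_Cons)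
    have "iso C x \<and> iso C (cl xs)" using iso_factors[of x "cl xs"] Cons.prems cl_Cons c False by simp
    then show ?thesis using Cons c False by (cases i) auto
  qed
qed

end

context CE begin

definition PD where "PD n c = dclass C ` {ds \<in> decomps C n c. \<forall>i<n. \<not> iso C (ds ! i)}"
definition isocls where "isocls c \<longleftrightarrow> (\<exists>g\<in>c. iso C g)"
definition N0 where "N0 c = {D \<in> Dbar C 2 c. \<not> iso C (rep D ! 0)}"
definition N1 where "N1 c = {D \<in> Dbar C 2 c. \<not> iso C (rep D ! 1)}"

lemma PD_sub: "PD n c \<subseteq> Dbar C n c" unfolding PD_def Dbar_def by auto

lemma PD_mem: assumes "c \<in> Cbar1 C" "1 \<le> n" "X \<in> Dbar C n c"
  shows "X \<in> PD n c \<longleftrightarrow> (\<forall>i<n. \<not> iso C (rep X ! i))"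
proof
  assume "X \<in> PD n c"
  then obtain ds where ds: "ds \<in> decomps C n c" "\<forall>i<n. \<not> iso C (ds ! i)" "X = dclass C ds" unfolding PD_def by auto
  have "dec_iso C ds (rep X)" using rep_dec_iso[OF assms(1) ds(1) assms(2)] ds(3) by simp
  then show "\<forall>i<n. \<not> iso C (rep X ! i)" using ds dec_iso_nth_iso unfolding decomps_def by auto
next
  assume "\<forall>i<n. \<not> iso C (rep X ! i)"
  then show "X \<in> PD n c" using Dbar_elim[OF assms(1,3,2)] unfolding PD_def by auto
qed

lemma isocls_mclass: assumes "f \<in> Mor C" shows "isocls (mclass C f) \<longleftrightarrow> iso C f"
proof
  assume "isocls (mclass C f)"
  then obtain g where "g \<in> mclass C f" "iso C g" unfolding isocls_def by blast
  then show "iso C f" using mor_iso_iso_iff in_mclass by blast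
next
  assume "iso C f" then show "isocls (mclass C f)" unfolding isocls_def using mor_iso_refl[OF assms] in_mclass by blast
qed

lemma cls_obtain: assumes "c \<in> Cbar1 C" obtains f where "f \<in> Mor C" "c = mclass C f"
  using assms unfolding Cbar1_def by blast

lemma PD_iso: assumes "c \<in> Cbar1 C" "isocls c" "1 \<le> n" shows "PD n c = {}"
proof -
  obtain f where f: "f \<in> Mor C" "c = mclass C f" using cls_obtain[OF assms(1)] by blast
  have "iso C f" using isocls_mclass[OF f(1)] assms f by simp
  have "\<not> (\<forall>i<n. \<not> iso C (ds ! i))" if "ds \<in> decomps C n c" for ds
  proof -
    have d: "composable C ds" "length ds = n" "cl ds \<in> mclass C f" using that f unfolding decomps_def by auto
    then have "mor_iso C f (cl ds)" using in_mclass by blast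
    then have "iso C (cl ds)" using mor_iso_iso \<open>iso C f\<close> by blast
    moreover have "ds \<noteq> []" "0 < length ds" using d assms(3) by auto
    ultimately have "iso C (ds ! 0)" using iso_cl[of ds 0] d by blast
    then show ?thesis using assms(3) by force
  qed
  then show ?thesis unfolding PD_def by auto
qed

lemma PD_eq: assumes "c \<in> Cbar1 C" "\<not> isocls c" "1 \<le> n" shows "PDbar C n c = PD n c"
proof (cases "n = 1")
  case True
  have "\<forall>i<n. \<not> iso C (ds ! i)" if "ds \<in> decomps C n c" for ds
  proof -
    have "ds ! 0 \<in> c" using that True unfolding decomps_def by (auto simp: length_Suc_conv)
    then show ?thesis using assms(2) True unfolding isocls_def by auto
  qed
  then show ?thesis unfolding PDbar_def PD_def Dbar_def using True by auto
next
  case False then show ?thesis unfolding PDbar_def PD_def by simp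
qed

lemma PD1: assumes "f \<in> Mor C" "\<not> iso C f" shows "PD 1 (mclass C f) = {dclass C [f]}"
proof -
  have "\<not> isocls (mclass C f)" using isocls_mclass[OF assms(1)] assms(2) by simp
  then have "PD 1 (mclass C f) = PDbar C 1 (mclass C f)" using PD_eq[of "mclass C f" 1] mclass_cls[OF assms(1)] by simp
  also have "\<dots> = Dbar C 1 (mclass C f)" unfolding PDbar_def by simp
  finally show ?thesis using Dbar1[OF assms(1)] by simp
qed

lemma PD_PDbar: assumes "1 \<le> n" shows "PD n c \<subseteq> PDbar C n c"
  unfolding PDbar_def using PD_sub[of n c] by (auto simp: PD_def)

lemma PDbar_fin: assumes "c \<in> Cbar1 C" "1 \<le> n" shows "finite (PDbar C n c)"
proof -
  have "PDbar C n c \<subseteq> snd ` (SIGMA n:{1..}. PDbar C n c)"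
  proof
    fix X assume "X \<in> PDbar C n c"
    then have "(n, X) \<in> (SIGMA n:{1..}. PDbar C n c)" using assms by simp
    then show "X \<in> snd ` (SIGMA n:{1..}. PDbar C n c)" by (rule rev_image_eqI) simp
  qed
  moreover have "finite (snd ` (SIGMA n:{1..}. PDbar C n c))" using Sigma_fin[OF assms(1)] by simp
  ultimately show ?thesis by (rule finite_subset)
qed

lemma PD_fin: "c \<in> Cbar1 C \<Longrightarrow> 1 \<le> n \<Longrightarrow> finite (PD n c)"
  using finite_subset[OF PD_PDbar PDbar_fin] by blast

lemma ranks_fin: assumes "c \<in> Cbar1 C" shows "finite {n. 1 \<le> n \<and> PD n c \<noteq> {}}"
proof -
  have "{n. 1 \<le> n \<and> PD n c \<noteq> {}} \<subseteq> fst ` (SIGMA n:{1..}. PDbar C n c)"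
  proof
    fix n assume "n \<in> {n. 1 \<le> n \<and> PD n c \<noteq> {}}"
    then obtain X where "1 \<le> n" "X \<in> PD n c" by auto
    then have "(n, X) \<in> (SIGMA n:{1..}. PDbar C n c)" using PD_PDbar by auto
    then show "n \<in> fst ` (SIGMA n:{1..}. PDbar C n c)" by (rule rev_image_eqI) simp
  qed
  moreover have "finite (fst ` (SIGMA n:{1..}. PDbar C n c))" using Sigma_fin[OF assms] by simp
  ultimately show ?thesis by (rule finite_subset)
qed

lemma D2_iso0: assumes "f \<in> Mor C" shows "{D \<in> Dbar C 2 (mclass C f). iso C (rep D ! 0)} = {dclass C [Idm C (Dom C f), f]}"
proof -
  let ?x = "Dom C f" let ?p = "[Idm C ?x, f]"
  have x: "?x \<in> Ob C" using assms dom_ob by simp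
  have cp: "composable C ?p" using assms x by (simp add: composable_Cons)
  have pd: "?p \<in> decomps C 2 (mclass C f)" unfolding decomps_def using cp cl_Cons[OF cp] assms x mor_iso_refl in_mclass by simp
  have c: "mclass C f \<in> Cbar1 C" using mclass_cls[OF assms] .
  have key: "dec_iso C ?p ds" if ds: "ds \<in> decomps C 2 (mclass C f)" "iso C (ds ! 0)" for ds
  proof -
    obtain a b where ab: "ds = [a, b]" using ds unfolding decomps_def by (auto simp: numeral_2_eq_2 length_Suc_conv)
    have cab: "composable C [a, b]" "mor_iso C f (Comp C b a)" using ds ab cl_Cons[of a "[b]"] unfolding decomps_def in_mclass by auto
    have m: "a \<in> Mor C" "b \<in> Mor C" "Cod C a = Dom C b" using cab by (auto simp: composable_Cons)
    obtain \<alpha> \<beta> where A: "iso C \<alpha>" "iso C \<beta>" "Dom C \<alpha> = Dom C f" "Cod C \<alpha> = Dom C (Comp C b a)"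
      "Dom C \<beta> = Cod C f" "Cod C \<beta> = Cod C (Comp C b a)" "Comp C (Comp C b a) \<alpha> = Comp C \<beta> f"
      using cab(2) unfolding mor_iso_def by blast
    have ia: "iso C a" using ds ab by simp
    have e: "Comp C b (Comp C a \<alpha>) = Comp C \<beta> f" using A assoc[of \<alpha> a b] m by simp
    have "via ?p [a, b] (\<lambda>i. if i = 0 then \<alpha> else if i = 1 then Comp C a \<alpha> else \<beta>)"
      apply (rule viaI[OF cp cab(1)])
      using A m ia iso_comp[of \<alpha> a] x e assms iso_mor'[of a] by (auto simp: less_Suc_eq numeral_2_eq_2)
    then show ?thesis unfolding dec_iso_via using cp cab ab by auto
  qed
  show ?thesis
  proof
    show "{D \<in> Dbar C 2 (mclass C f). iso C (rep D ! 0)} \<subseteq> {dclass C ?p}"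
    proof
      fix D assume "D \<in> {D \<in> Dbar C 2 (mclass C f). iso C (rep D ! 0)}"
      then have D: "D \<in> Dbar C 2 (mclass C f)" "iso C (rep D ! 0)" by auto
      have "rep D \<in> decomps C 2 (mclass C f)" "D = dclass C (rep D)" using Dbar_elim[OF c D(1)] by auto
      then show "D \<in> {dclass C ?p}" using key[of "rep D"] D dclass_eq by auto
    qed
    have "iso C (rep (dclass C ?p) ! 0)"
    proof -
      have "dec_iso C ?p (rep (dclass C ?p))" using rep_dec_iso[OF c pd] by simp
      then show ?thesis using dec_iso_nth_iso[of ?p _ 0] iso_id[OF x] by auto
    qed
    then show "{dclass C ?p} \<subseteq> {D \<in> Dbar C 2 (mclass C f). iso C (rep D ! 0)}" using Dbar_intro[OF pd] by auto
  qed
qed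

lemma D2_iso1: assumes "f \<in> Mor C" shows "{D \<in> Dbar C 2 (mclass C f). iso C (rep D ! 1)} = {dclass C [f, Idm C (Cod C f)]}"
proof -
  let ?y = "Cod C f" let ?p = "[f, Idm C ?y]"
  have y: "?y \<in> Ob C" using assms cod_ob by simp
  have cp: "composable C ?p" using assms y by (simp add: composable_Cons)
  have pd: "?p \<in> decomps C 2 (mclass C f)" unfolding decomps_def using cp cl_Cons[OF cp] assms y mor_iso_refl in_mclass by simp
  have c: "mclass C f \<in> Cbar1 C" using mclass_cls[OF assms] .
  have key: "dec_iso C ?p ds" if ds: "ds \<in> decomps C 2 (mclass C f)" "iso C (ds ! 1)" for ds
  proof -
    obtain a b where ab: "ds = [a, b]" using ds unfolding decomps_def by (auto simp: numeral_2_eq_2 length_Suc_conv)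
    have cab: "composable C [a, b]" "mor_iso C f (Comp C b a)" using ds ab cl_Cons[of a "[b]"] unfolding decomps_def in_mclass by auto
    have m: "a \<in> Mor C" "b \<in> Mor C" "Cod C a = Dom C b" using cab by (auto simp: composable_Cons)
    obtain \<alpha> \<beta> where A: "iso C \<alpha>" "iso C \<beta>" "Dom C \<alpha> = Dom C f" "Cod C \<alpha> = Dom C (Comp C b a)"
      "Dom C \<beta> = Cod C f" "Cod C \<beta> = Cod C (Comp C b a)" "Comp C (Comp C b a) \<alpha> = Comp C \<beta> f"
      using cab(2) unfolding mor_iso_def by blast
    have ib: "iso C b" using ds ab by simp
    let ?m = "Comp C (inv b) \<beta>"
    have im: "iso C ?m" "Dom C ?m = Cod C f" "Cod C ?m = Cod C a" using A ib m iso_comp iso_inv by auto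
    have e1: "Comp C a \<alpha> = Comp C ?m f"
    proof -
      have "Comp C ?m f = Comp C (inv b) (Comp C \<beta> f)" using assoc[of f \<beta> "inv b"] A ib m assms by simp
      also have "\<dots> = Comp C (inv b) (Comp C b (Comp C a \<alpha>))" using A assoc[of \<alpha> a b] m by simp
      also have "\<dots> = Comp C (Comp C (inv b) b) (Comp C a \<alpha>)" using assoc[of "Comp C a \<alpha>" b "inv b"] A m ib by simp
      also have "\<dots> = Comp C a \<alpha>" using A m ib by simp
      finally show ?thesis by simp
    qed
    have e2: "Comp C b ?m = Comp C \<beta> (Idm C ?y)"
    proof -
      have "Comp C b ?m = Comp C (Comp C b (inv b)) \<beta>" using assoc[of \<beta> "inv b" b] A ib m by simp
      then show ?thesis using A ib m assms by simp
    qed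
    have "via ?p [a, b] (\<lambda>i. if i = 0 then \<alpha> else if i = 1 then ?m else \<beta>)"
      apply (rule viaI[OF cp cab(1)])
      using A m ib im y e1 e2 assms by (auto simp: less_Suc_eq numeral_2_eq_2)
    then show ?thesis unfolding dec_iso_via using cp cab ab by auto
  qed
  show ?thesis
  proof
    show "{D \<in> Dbar C 2 (mclass C f). iso C (rep D ! 1)} \<subseteq> {dclass C ?p}"
    proof
      fix D assume "D \<in> {D \<in> Dbar C 2 (mclass C f). iso C (rep D ! 1)}"
      then have D: "D \<in> Dbar C 2 (mclass C f)" "iso C (rep D ! 1)" by auto
      have "rep D \<in> decomps C 2 (mclass C f)" "D = dclass C (rep D)" using Dbar_elim[OF c D(1)] by auto
      then show "D \<in> {dclass C ?p}" using key[of "rep D"] D dclass_eq by auto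
    qed
    have "iso C (rep (dclass C ?p) ! 1)"
    proof -
      have "dec_iso C ?p (rep (dclass C ?p))" using rep_dec_iso[OF c pd] by simp
      then show ?thesis using dec_iso_nth_iso[of ?p _ 1] iso_id[OF y] by auto
    qed
    then show "{dclass C ?p} \<subseteq> {D \<in> Dbar C 2 (mclass C f). iso C (rep D ! 1)}" using Dbar_intro[OF pd] by auto
  qed
qed

end

context CE begin

lemma D2_rep: assumes "f \<in> Mor C" "D \<in> Dbar C 2 (mclass C f)"
  shows "mclass C (rep D ! 0) \<in> Cbar1 C" "mclass C (rep D ! 1) \<in> Cbar1 C" "rep D ! 0 \<in> Mor C" "rep D ! 1 \<in> Mor C"
    "length (rep D) = 2" "composable C (rep D)"
proof -
  have r: "rep D \<in> decomps C 2 (mclass C f)" "composable C (rep D)" "length (rep D) = 2" using Dbar_elim[OF mclass_cls[OF assms(1)] assms(2)] by auto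
  show "rep D ! 0 \<in> Mor C" "rep D ! 1 \<in> Mor C" using r composable_mor by auto
  then show "mclass C (rep D ! 0) \<in> Cbar1 C" "mclass C (rep D ! 1) \<in> Cbar1 C" using mclass_cls by auto
  show "length (rep D) = 2" "composable C (rep D)" using r by auto
qed

lemma D0_classes: assumes "f \<in> Mor C"
  shows "mclass C (rep (dclass C [Idm C (Dom C f), f]) ! 0) = mclass C (Idm C (Dom C f))"
    "mclass C (rep (dclass C [Idm C (Dom C f), f]) ! 1) = mclass C f"
proof -
  let ?p = "[Idm C (Dom C f), f]"
  have x: "Dom C f \<in> Ob C" using assms dom_ob by simp
  have cp: "composable C ?p" using assms x by (simp add: composable_Cons)
  have d: "dec_iso C ?p (rep (dclass C ?p))" using rep_dclass[OF cp] by simp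
  show "mclass C (rep (dclass C ?p) ! 0) = mclass C (Idm C (Dom C f))"
    using dec_iso_nth[OF d, of 0] mclass_eq by (metis length_Cons list.size(3) nth_Cons_0 zero_less_Suc)
  show "mclass C (rep (dclass C ?p) ! 1) = mclass C f"
    using dec_iso_nth[OF d, of 1] mclass_eq by simp
qed

lemma D1_classes: assumes "f \<in> Mor C"
  shows "mclass C (rep (dclass C [f, Idm C (Cod C f)]) ! 0) = mclass C f"
    "mclass C (rep (dclass C [f, Idm C (Cod C f)]) ! 1) = mclass C (Idm C (Cod C f))"
proof -
  let ?p = "[f, Idm C (Cod C f)]"
  have x: "Cod C f \<in> Ob C" using assms cod_ob by simp
  have cp: "composable C ?p" using assms x by (simp add: composable_Cons)
  have d: "dec_iso C ?p (rep (dclass C ?p))" using rep_dclass[OF cp] by simp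
  show "mclass C (rep (dclass C ?p) ! 0) = mclass C f"
    using dec_iso_nth[OF d, of 0] mclass_eq by simp
  show "mclass C (rep (dclass C ?p) ! 1) = mclass C (Idm C (Cod C f))"
    using dec_iso_nth[OF d, of 1] mclass_eq by simp
qed

lemma Dbar2_fin: assumes "f \<in> Mor C" shows "finite (Dbar C 2 (mclass C f))"
proof -
  let ?c = "mclass C f"
  have c: "?c \<in> Cbar1 C" using mclass_cls[OF assms] .
  have "Dbar C 2 ?c \<subseteq> {D \<in> Dbar C 2 ?c. iso C (rep D ! 0)} \<union> {D \<in> Dbar C 2 ?c. iso C (rep D ! 1)} \<union> PD 2 ?c"
  proof
    fix D assume D: "D \<in> Dbar C 2 ?c"
    show "D \<in> {D \<in> Dbar C 2 ?c. iso C (rep D ! 0)} \<union> {D \<in> Dbar C 2 ?c. iso C (rep D ! 1)} \<union> PD 2 ?c"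
    proof (cases "iso C (rep D ! 0) \<or> iso C (rep D ! 1)")
      case True then show ?thesis using D by auto
    next
      case False
      then have "\<forall>i<2. \<not> iso C (rep D ! i)" by (auto simp: less_Suc_eq numeral_2_eq_2)
      then show ?thesis using PD_mem[OF c _ D] by simp
    qed
  qed
  moreover have "finite (PD 2 ?c)" using PD_fin[OF c] by simp
  moreover have "finite ({D \<in> Dbar C 2 ?c. iso C (rep D ! 0)} \<union> {D \<in> Dbar C 2 ?c. iso C (rep D ! 1)} \<union> PD 2 ?c)"
    unfolding D2_iso0[OF assms] D2_iso1[OF assms] using \<open>finite (PD 2 ?c)\<close> by simp
  ultimately show ?thesis using finite_subset by blast
qed

lemma conv_expand: "conv C \<alpha> \<beta> c = (\<Sum>D\<in>Dbar C 2 c. \<alpha> (mclass C (rep D ! 0)) * \<beta> (mclass C (rep D ! 1)))"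
  unfolding conv_def rep_def Let_def by simp

lemma conv_split0: assumes "f \<in> Mor C"
  shows "conv C \<alpha> \<beta> (mclass C f) = \<alpha> (mclass C (Idm C (Dom C f))) * \<beta> (mclass C f) +
    (\<Sum>D\<in>N0 (mclass C f). \<alpha> (mclass C (rep D ! 0)) * \<beta> (mclass C (rep D ! 1)))"
proof -
  let ?D0 = "dclass C [Idm C (Dom C f), f]"
  have e: "Dbar C 2 (mclass C f) = insert ?D0 (N0 (mclass C f))" using D2_iso0[OF assms] unfolding N0_def by blast
  have n: "?D0 \<notin> N0 (mclass C f)" using D2_iso0[OF assms] unfolding N0_def by blast
  have fin: "finite (N0 (mclass C f))" using Dbar2_fin[OF assms] unfolding N0_def by simp
  show ?thesis unfolding conv_expand e sum.insert[OF fin n] using D0_classes[OF assms] by simp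
qed

lemma conv_split1: assumes "f \<in> Mor C"
  shows "conv C \<alpha> \<beta> (mclass C f) = \<alpha> (mclass C f) * \<beta> (mclass C (Idm C (Cod C f))) +
    (\<Sum>D\<in>N1 (mclass C f). \<alpha> (mclass C (rep D ! 0)) * \<beta> (mclass C (rep D ! 1)))"
proof -
  let ?D1 = "dclass C [f, Idm C (Cod C f)]"
  have e: "Dbar C 2 (mclass C f) = insert ?D1 (N1 (mclass C f))" using D2_iso1[OF assms] unfolding N1_def by blast
  have n: "?D1 \<notin> N1 (mclass C f)" using D2_iso1[OF assms] unfolding N1_def by blast
  have fin: "finite (N1 (mclass C f))" using Dbar2_fin[OF assms] unfolding N1_def by simp
  show ?thesis unfolding conv_expand e sum.insert[OF fin n] using D1_classes[OF assms] by simp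
qed

lemma N0_iso: assumes "f \<in> Mor C" "iso C f" shows "N0 (mclass C f) = {}"
proof -
  have "iso C (rep D ! 0)" if D: "D \<in> Dbar C 2 (mclass C f)" for D
  proof -
    note r = D2_rep[OF assms(1) D]
    have "rep D \<in> decomps C 2 (mclass C f)" using Dbar_elim[OF mclass_cls[OF assms(1)] D] by auto
    then have "mor_iso C f (cl (rep D))" unfolding decomps_def in_mclass by simp
    then have "iso C (cl (rep D))" using mor_iso_iso assms by blast
    moreover have "rep D \<noteq> []" using r by auto
    ultimately show ?thesis using iso_cl[of "rep D" 0] r by auto
  qed
  then show ?thesis unfolding N0_def by auto
qed

lemma N1_iso: assumes "f \<in> Mor C" "iso C f" shows "N1 (mclass C f) = {}"
proof -
  have "iso C (rep D ! 1)" if D: "D \<in> Dbar C 2 (mclass C f)" for D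
  proof -
    note r = D2_rep[OF assms(1) D]
    have "rep D \<in> decomps C 2 (mclass C f)" using Dbar_elim[OF mclass_cls[OF assms(1)] D] by auto
    then have "mor_iso C f (cl (rep D))" unfolding decomps_def in_mclass by simp
    then have "iso C (cl (rep D))" using mor_iso_iso assms by blast
    moreover have "rep D \<noteq> []" using r by auto
    ultimately show ?thesis using iso_cl[of "rep D" 1] r by auto
  qed
  then show ?thesis unfolding N1_def by auto
qed

end

definition deltaC :: "('o, 'm) cat \<Rightarrow> 'm set \<Rightarrow> 'r::comm_ring_1" where
  "deltaC C c = (if (\<exists>g\<in>c. iso C g) then 1 else 0)"

context CE begin

abbreviation delta where "delta \<equiv> deltaC C"

lemma delta_id: "x \<in> Ob C \<Longrightarrow> delta (mclass C (Idm C x)) = 1"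
  unfolding deltaC_def using isocls_mclass[unfolded isocls_def] iso_id by simp

lemma delta_noniso: "g \<in> Mor C \<Longrightarrow> \<not> iso C g \<Longrightarrow> delta (mclass C g) = 0"
  unfolding deltaC_def using isocls_mclass[unfolded isocls_def] by simp

lemma delta_left: assumes "f \<in> Mor C" shows "conv C delta \<alpha> (mclass C f) = \<alpha> (mclass C f)"
proof -
  have "(\<Sum>D\<in>N0 (mclass C f). delta (mclass C (rep D ! 0)) * \<alpha> (mclass C (rep D ! 1))) = 0"
  proof (rule sum.neutral, rule ballI)
    fix D assume D: "D \<in> N0 (mclass C f)"
    then have D2: "D \<in> Dbar C 2 (mclass C f)" "\<not> iso C (rep D ! 0)" unfolding N0_def by auto
    then show "delta (mclass C (rep D ! 0)) * \<alpha> (mclass C (rep D ! 1)) = 0"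
      using D2_rep[OF assms D2(1)] D2(2) by (simp add: delta_noniso)
  qed
  then show ?thesis using conv_split0[OF assms, of delta \<alpha>] dom_ob assms by (simp add: delta_id)
qed

lemma delta_right: assumes "f \<in> Mor C" shows "conv C \<alpha> delta (mclass C f) = \<alpha> (mclass C f)"
proof -
  have "(\<Sum>D\<in>N1 (mclass C f). \<alpha> (mclass C (rep D ! 0)) * delta (mclass C (rep D ! 1))) = 0"
  proof (rule sum.neutral, rule ballI)
    fix D assume D: "D \<in> N1 (mclass C f)"
    then have D2: "D \<in> Dbar C 2 (mclass C f)" "\<not> iso C (rep D ! 1)" unfolding N1_def by auto
    then show "\<alpha> (mclass C (rep D ! 0)) * delta (mclass C (rep D ! 1)) = 0"
      using D2_rep[OF assms D2(1)] D2(2) by (simp add: delta_noniso)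
  qed
  then show ?thesis using conv_split1[OF assms, of \<alpha> delta] cod_ob assms by (simp add: delta_id)
qed

lemma delta_identity: "conv_identity C delta"
  unfolding conv_identity_def Cbar1_def using delta_left delta_right by auto

lemma identity_unique: assumes "conv_identity C e" "c \<in> Cbar1 C" shows "e c = delta c"
proof -
  obtain f where f: "f \<in> Mor C" "c = mclass C f" using cls_obtain[OF assms(2)] by blast
  have "conv C e delta c = e c" using delta_right f by simp
  moreover have "conv C e delta c = delta c" using assms unfolding conv_identity_def by blast
  ultimately show ?thesis by simp
qed

lemma conv_cong: assumes "\<forall>c\<in>Cbar1 C. \<alpha> c = \<alpha>' c" "\<forall>c\<in>Cbar1 C. \<beta> c = \<beta>' c" "f \<in> Mor C"
  shows "conv C \<alpha> \<beta> (mclass C f) = conv C \<alpha>' \<beta>' (mclass C f)"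
  unfolding conv_expand using assms D2_rep[OF assms(3)] by (intro sum.cong) auto

lemma rep_nth_class: assumes "composable C ds" "ds \<noteq> []" "i < length ds"
  shows "mclass C (rep (dclass C ds) ! i) = mclass C (ds ! i)"
  using dec_iso_nth[OF rep_dclass[OF assms(1,2)] assms(3)] mclass_eq by simp

lemma Dbar1_rep: assumes "g \<in> Mor C" shows "mclass C (rep (dclass C [g]) ! 0) = mclass C g"
  using rep_nth_class[of "[g]" 0] assms by simp

lemma S21: assumes "f \<in> Mor C"
  shows "(\<Sum>D\<in>Dbar C 2 (mclass C f). \<Sum>E\<in>Dbar C 2 (mclass C (rep D ! 0)).
           F3 (mclass C (rep E ! 0)) (mclass C (rep E ! 1)) (mclass C (rep D ! 1)))
       = (\<Sum>T\<in>Dbar C 3 (mclass C f). F3 (mclass C (rep T ! 0)) (mclass C (rep T ! 1)) (mclass C (rep T ! 2)))"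
proof -
  let ?c = "mclass C f"
  have c: "?c \<in> Cbar1 C" using mclass_cls[OF assms] .
  let ?G = "\<lambda>(D, E, F). F3 (mclass C (rep E ! 0)) (mclass C (rep E ! 1)) (mclass C (rep F ! 0))"
  have step1: "(\<Sum>E\<in>Dbar C 2 (mclass C (rep D ! 0)). F3 (mclass C (rep E ! 0)) (mclass C (rep E ! 1)) (mclass C (rep D ! 1)))
      = (\<Sum>EF\<in>Dbar C 2 (mclass C (rep D ! 0)) \<times> Dbar C 1 (mclass C (rep D ! 1)). ?G (D, EF))" if D: "D \<in> Dbar C 2 ?c" for D
  proof -
    note r = D2_rep[OF assms D]
    have "Dbar C 1 (mclass C (rep D ! 1)) = {dclass C [rep D ! 1]}" using Dbar1 r by simp
    then show ?thesis using Dbar1_rep[of "rep D ! 1"] r by (simp add: sum.cartesian_product[symmetric])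
  qed
  have "(\<Sum>D\<in>Dbar C 2 ?c. \<Sum>E\<in>Dbar C 2 (mclass C (rep D ! 0)).
           F3 (mclass C (rep E ! 0)) (mclass C (rep E ! 1)) (mclass C (rep D ! 1)))
      = (\<Sum>D\<in>Dbar C 2 ?c. \<Sum>EF\<in>Dbar C 2 (mclass C (rep D ! 0)) \<times> Dbar C 1 (mclass C (rep D ! 1)). ?G (D, EF))"
    using step1 by (rule sum.cong[OF refl])
  also have "\<dots> = (\<Sum>X\<in>SS 2 1 ?c. ?G X)"
  proof -
    have "(\<Sum>D\<in>Dbar C 2 ?c. \<Sum>EF\<in>Dbar C 2 (mclass C (rep D ! 0)) \<times> Dbar C 1 (mclass C (rep D ! 1)). ?G (D, EF))
       = (\<Sum>X\<in>SS 2 1 ?c. (\<lambda>(D, EF). ?G (D, EF)) X)"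
      unfolding SS_def
    proof (rule sum.Sigma)
      show "finite (Dbar C 2 ?c)" using Dbar2_fin[OF assms] .
      show "\<forall>x\<in>Dbar C 2 ?c. finite (Dbar C 2 (mclass C (rep x ! 0)) \<times> Dbar C 1 (mclass C (rep x ! 1)))"
      proof
        fix D assume D: "D \<in> Dbar C 2 ?c"
        note r = D2_rep[OF assms D]
        show "finite (Dbar C 2 (mclass C (rep D ! 0)) \<times> Dbar C 1 (mclass C (rep D ! 1)))"
          using Dbar2_fin[of "rep D ! 0"] Dbar1[of "rep D ! 1"] r by simp
      qed
    qed
    moreover have "(\<lambda>(D, EF). ?G (D, EF)) = ?G" by auto
    ultimately show ?thesis by simp
  qed
  also have "\<dots> = (\<Sum>T\<in>Dbar C (2+1) ?c. ?G (split_map 2 T))"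
    using sum.reindex_bij_betw[OF split_bij[OF c, of 2 1], of ?G] by simp
  also have "\<dots> = (\<Sum>T\<in>Dbar C 3 ?c. F3 (mclass C (rep T ! 0)) (mclass C (rep T ! 1)) (mclass C (rep T ! 2)))"
  proof (rule sum.cong)
    fix T assume T: "T \<in> Dbar C 3 ?c"
    have t: "composable C (rep T)" "length (rep T) = 3" using Dbar_elim[OF c T] by auto
    note d = td[OF t(1), of 2 1] 
    have d': "take 2 (rep T) \<noteq> []" "drop 2 (rep T) \<noteq> []" "composable C (take 2 (rep T))" "composable C (drop 2 (rep T))"
      using d t by auto
    have "mclass C (rep (dclass C (take 2 (rep T))) ! 0) = mclass C (rep T ! 0)"
      using rep_nth_class[OF d'(3,1), of 0] t by simp
    moreover have "mclass C (rep (dclass C (take 2 (rep T))) ! 1) = mclass C (rep T ! 1)"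
      using rep_nth_class[OF d'(3,1), of 1] t by simp
    moreover have "mclass C (rep (dclass C (drop 2 (rep T))) ! 0) = mclass C (rep T ! 2)"
      using rep_nth_class[OF d'(4,2), of 0] t by simp
    ultimately show "?G (split_map 2 T) = F3 (mclass C (rep T ! 0)) (mclass C (rep T ! 1)) (mclass C (rep T ! 2))"
      unfolding split_map_def by simp
  qed simp
  finally show ?thesis .
qed

end

context CE begin

lemma S12: assumes "f \<in> Mor C"
  shows "(\<Sum>D\<in>Dbar C 2 (mclass C f). \<Sum>E\<in>Dbar C 2 (mclass C (rep D ! 1)).
           F3 (mclass C (rep D ! 0)) (mclass C (rep E ! 0)) (mclass C (rep E ! 1)))
       = (\<Sum>T\<in>Dbar C 3 (mclass C f). F3 (mclass C (rep T ! 0)) (mclass C (rep T ! 1)) (mclass C (rep T ! 2)))"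
proof -
  let ?c = "mclass C f"
  have c: "?c \<in> Cbar1 C" using mclass_cls[OF assms] .
  let ?G = "\<lambda>(D, E, F). F3 (mclass C (rep E ! 0)) (mclass C (rep F ! 0)) (mclass C (rep F ! 1))"
  have step1: "(\<Sum>E\<in>Dbar C 2 (mclass C (rep D ! 1)). F3 (mclass C (rep D ! 0)) (mclass C (rep E ! 0)) (mclass C (rep E ! 1)))
      = (\<Sum>EF\<in>Dbar C 1 (mclass C (rep D ! 0)) \<times> Dbar C 2 (mclass C (rep D ! 1)). ?G (D, EF))" if D: "D \<in> Dbar C 2 ?c" for D
  proof -
    note r = D2_rep[OF assms D]
    have "Dbar C 1 (mclass C (rep D ! 0)) = {dclass C [rep D ! 0]}" using Dbar1 r by simp
    then show ?thesis using Dbar1_rep[of "rep D ! 0"] r by (simp add: sum.cartesian_product[symmetric])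
  qed
  have "(\<Sum>D\<in>Dbar C 2 ?c. \<Sum>E\<in>Dbar C 2 (mclass C (rep D ! 1)).
           F3 (mclass C (rep D ! 0)) (mclass C (rep E ! 0)) (mclass C (rep E ! 1)))
      = (\<Sum>D\<in>Dbar C 2 ?c. \<Sum>EF\<in>Dbar C 1 (mclass C (rep D ! 0)) \<times> Dbar C 2 (mclass C (rep D ! 1)). ?G (D, EF))"
    using step1 by (rule sum.cong[OF refl])
  also have "\<dots> = (\<Sum>X\<in>SS 1 2 ?c. ?G X)"
  proof -
    have "(\<Sum>D\<in>Dbar C 2 ?c. \<Sum>EF\<in>Dbar C 1 (mclass C (rep D ! 0)) \<times> Dbar C 2 (mclass C (rep D ! 1)). ?G (D, EF))
       = (\<Sum>X\<in>SS 1 2 ?c. (\<lambda>(D, EF). ?G (D, EF)) X)"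
      unfolding SS_def
    proof (rule sum.Sigma)
      show "finite (Dbar C 2 ?c)" using Dbar2_fin[OF assms] .
      show "\<forall>x\<in>Dbar C 2 ?c. finite (Dbar C 1 (mclass C (rep x ! 0)) \<times> Dbar C 2 (mclass C (rep x ! 1)))"
      proof
        fix D assume D: "D \<in> Dbar C 2 ?c"
        note r = D2_rep[OF assms D]
        show "finite (Dbar C 1 (mclass C (rep D ! 0)) \<times> Dbar C 2 (mclass C (rep D ! 1)))"
          using Dbar2_fin[of "rep D ! 1"] Dbar1[of "rep D ! 0"] r by simp
      qed
    qed
    moreover have "(\<lambda>(D, EF). ?G (D, EF)) = ?G" by auto
    ultimately show ?thesis by simp
  qed
  also have "\<dots> = (\<Sum>T\<in>Dbar C (1+2) ?c. ?G (split_map 1 T))"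
    using sum.reindex_bij_betw[OF split_bij[OF c, of 1 2], of ?G] by simp
  also have "\<dots> = (\<Sum>T\<in>Dbar C 3 ?c. F3 (mclass C (rep T ! 0)) (mclass C (rep T ! 1)) (mclass C (rep T ! 2)))"
  proof (rule sum.cong)
    fix T assume T: "T \<in> Dbar C 3 ?c"
    have t: "composable C (rep T)" "length (rep T) = 3" using Dbar_elim[OF c T] by auto
    note d = td[OF t(1), of 1 2]
    have d': "take 1 (rep T) \<noteq> []" "drop 1 (rep T) \<noteq> []" "composable C (take 1 (rep T))" "composable C (drop 1 (rep T))"
      using d t by auto
    have "mclass C (rep (dclass C (take 1 (rep T))) ! 0) = mclass C (rep T ! 0)"
      using rep_nth_class[OF d'(3,1), of 0] t by simp
    moreover have "mclass C (rep (dclass C (drop 1 (rep T))) ! 0) = mclass C (rep T ! 1)"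
      using rep_nth_class[OF d'(4,2), of 0] t by simp
    moreover have "mclass C (rep (dclass C (drop 1 (rep T))) ! 1) = mclass C (rep T ! 2)"
      using rep_nth_class[OF d'(4,2), of 1] t by (simp add: numeral_2_eq_2)
    ultimately show "?G (split_map 1 T) = F3 (mclass C (rep T ! 0)) (mclass C (rep T ! 1)) (mclass C (rep T ! 2))"
      unfolding split_map_def by simp
  qed (simp add: numeral_3_eq_3)
  finally show ?thesis .
qed

lemma conv_assoc: assumes "f \<in> Mor C"
  shows "conv C (conv C \<alpha> \<beta>) \<gamma> (mclass C f) = conv C \<alpha> (conv C \<beta> \<gamma>) (mclass C f)"
proof -
  have "conv C (conv C \<alpha> \<beta>) \<gamma> (mclass C f) =
     (\<Sum>D\<in>Dbar C 2 (mclass C f). \<Sum>E\<in>Dbar C 2 (mclass C (rep D ! 0)).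
           \<alpha> (mclass C (rep E ! 0)) * \<beta> (mclass C (rep E ! 1)) * \<gamma> (mclass C (rep D ! 1)))"
    unfolding conv_expand[of "conv C \<alpha> \<beta>"] conv_expand[of \<alpha> \<beta>] by (simp add: sum_distrib_right)
  also have "\<dots> = (\<Sum>T\<in>Dbar C 3 (mclass C f). \<alpha> (mclass C (rep T ! 0)) * \<beta> (mclass C (rep T ! 1)) * \<gamma> (mclass C (rep T ! 2)))"
    using S21[OF assms, of "\<lambda>a b c. \<alpha> a * \<beta> b * \<gamma> c"] by simp
  also have "\<dots> = (\<Sum>D\<in>Dbar C 2 (mclass C f). \<Sum>E\<in>Dbar C 2 (mclass C (rep D ! 1)).
           \<alpha> (mclass C (rep D ! 0)) * \<beta> (mclass C (rep E ! 0)) * \<gamma> (mclass C (rep E ! 1)))"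
    using S12[OF assms, of "\<lambda>a b c. \<alpha> a * \<beta> b * \<gamma> c"] by simp
  also have "\<dots> = conv C \<alpha> (conv C \<beta> \<gamma>) (mclass C f)"
    unfolding conv_expand[of \<alpha> "conv C \<beta> \<gamma>"] conv_expand[of \<beta> \<gamma>] by (simp add: sum_distrib_left mult.assoc)
  finally show ?thesis .
qed

end

context CE begin

lemma PD_split: assumes "c \<in> Cbar1 C" "1 \<le> k" "1 \<le> l" "T \<in> Dbar C (k+l) c" "split_map k T = (D, E1, E2)"
  shows "T \<in> PD (k+l) c \<longleftrightarrow> E1 \<in> PD k (mclass C (rep D ! 0)) \<and> E2 \<in> PD l (mclass C (rep D ! 1))"
proof -
  have X: "(D, E1, E2) \<in> SS k l c" using split_into[OF assms(1-4)] assms(5) by simp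
  then have D: "D \<in> Dbar C 2 c" and E1: "E1 \<in> Dbar C k (mclass C (rep D ! 0))" and E2: "E2 \<in> Dbar C l (mclass C (rep D ! 1))"
    unfolding SS_def by auto
  have r: "composable C (rep D)" "length (rep D) = 2" using Dbar_elim[OF assms(1) D] by auto
  have cc: "mclass C (rep D ! 0) \<in> Cbar1 C" "mclass C (rep D ! 1) \<in> Cbar1 C"
    using r composable_mor mclass_cls by auto
  let ?t = "rep T"
  have t: "composable C ?t" "length ?t = k + l" using Dbar_elim[OF assms(1,4)] assms by auto
  note d = td[OF t assms(2,3)]
  have e: "E1 = dclass C (take k ?t)" "E2 = dclass C (drop k ?t)" using assms(5) unfolding split_map_def by auto
  have i1: "dec_iso C (take k ?t) (rep E1)" using rep_dclass[OF d(3,1)] e by simp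
  have i2: "dec_iso C (drop k ?t) (rep E2)" using rep_dclass[OF d(4,2)] e by simp
  have "E1 \<in> PD k (mclass C (rep D ! 0)) \<longleftrightarrow> (\<forall>i<k. \<not> iso C (take k ?t ! i))"
    using PD_mem[OF cc(1) assms(2) E1] dec_iso_nth_iso[OF i1] d by auto
  moreover have "E2 \<in> PD l (mclass C (rep D ! 1)) \<longleftrightarrow> (\<forall>i<l. \<not> iso C (drop k ?t ! i))"
    using PD_mem[OF cc(2) assms(3) E2] dec_iso_nth_iso[OF i2] d by auto
  moreover have "T \<in> PD (k+l) c \<longleftrightarrow> (\<forall>i<k+l. \<not> iso C (?t ! i))" using PD_mem[OF assms(1) _ assms(4)] assms by simp
  moreover have "(\<forall>i<k+l. \<not> iso C (?t ! i)) \<longleftrightarrow> (\<forall>i<k. \<not> iso C (take k ?t ! i)) \<and> (\<forall>i<l. \<not> iso C (drop k ?t ! i))"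
  proof
    assume a: "\<forall>i<k+l. \<not> iso C (?t ! i)"
    show "(\<forall>i<k. \<not> iso C (take k ?t ! i)) \<and> (\<forall>i<l. \<not> iso C (drop k ?t ! i))"
      using a t by auto
  next
    assume a: "(\<forall>i<k. \<not> iso C (take k ?t ! i)) \<and> (\<forall>i<l. \<not> iso C (drop k ?t ! i))"
    show "\<forall>i<k+l. \<not> iso C (?t ! i)"
    proof (intro allI impI)
      fix i assume i: "i < k + l"
      show "\<not> iso C (?t ! i)"
      proof (cases "i < k")
        case True then show ?thesis using a t by auto
      next
        case False
        then obtain j where "i = k + j" "j < l" using i by (metis add_less_cancel_left le_Suc_ex not_less)
        then show ?thesis using a t by auto
      qed
    qed
  qed
  ultimately show ?thesis by simp
qed

definition rank where "rank c = Max (insert 0 {n. 1 \<le> n \<and> PD n c \<noteq> {}})"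

lemma rank_fin: "c \<in> Cbar1 C \<Longrightarrow> finite (insert 0 {n. 1 \<le> n \<and> PD n c \<noteq> {}})" using ranks_fin by simp

lemma rank_ge: assumes "c \<in> Cbar1 C" "1 \<le> n" "PD n c \<noteq> {}" shows "n \<le> rank c"
  unfolding rank_def using rank_fin[OF assms(1)] assms by (intro Max_ge) auto

lemma rank_PD: assumes "c \<in> Cbar1 C" "1 \<le> rank c" shows "PD (rank c) c \<noteq> {}"
proof -
  have "rank c \<in> insert 0 {n. 1 \<le> n \<and> PD n c \<noteq> {}}" unfolding rank_def using rank_fin[OF assms(1)] by (intro Max_in) auto
  then show ?thesis using assms(2) by auto
qed

lemma rank_pos: assumes "f \<in> Mor C" "\<not> iso C f" shows "1 \<le> rank (mclass C f)"
  using rank_ge[OF mclass_cls[OF assms(1)], of 1] PD1[OF assms] by simp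

lemma RD0: assumes "f \<in> Mor C" "D \<in> Dbar C 2 (mclass C f)" "\<not> iso C (rep D ! 0)"
  shows "rank (mclass C (rep D ! 1)) < rank (mclass C f)"
proof -
  let ?c = "mclass C f"
  have c: "?c \<in> Cbar1 C" using mclass_cls[OF assms(1)] .
  note r = D2_rep[OF assms(1,2)]
  have nf: "\<not> iso C f" using N0_iso[OF assms(1)] assms unfolding N0_def by auto
  let ?m = "rank (mclass C (rep D ! 1))"
  show ?thesis
  proof (cases "?m = 0")
    case True then show ?thesis using rank_pos[OF assms(1) nf] by simp
  next
    case False
    then obtain E where E: "E \<in> PD ?m (mclass C (rep D ! 1))" using rank_PD[OF r(2)] by auto
    have E': "E \<in> Dbar C ?m (mclass C (rep D ! 1))" using E PD_sub by auto
    have "(D, dclass C [rep D ! 0], E) \<in> SS 1 ?m ?c" unfolding SS_def using assms(2) E' Dbar1[OF r(3)] by simp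
    then have "(D, dclass C [rep D ! 0], E) \<in> split_map 1 ` Dbar C (1 + ?m) ?c"
      using split_onto[OF c, of 1 ?m] False by simp
    then obtain T where T1: "T \<in> Dbar C (1 + ?m) ?c" and T2: "(D, dclass C [rep D ! 0], E) = split_map 1 T"
      by blast
    note T = T1 T2[symmetric]
    have "T \<in> PD (1 + ?m) ?c" using PD_split[OF c _ _ T] False E PD1[OF r(3) assms(3)] by simp
    then have "1 + ?m \<le> rank ?c" using rank_ge[OF c] by auto
    then show ?thesis by simp
  qed
qed

lemma RD1: assumes "f \<in> Mor C" "D \<in> Dbar C 2 (mclass C f)" "\<not> iso C (rep D ! 1)"
  shows "rank (mclass C (rep D ! 0)) < rank (mclass C f)"
proof -
  let ?c = "mclass C f"
  have c: "?c \<in> Cbar1 C" using mclass_cls[OF assms(1)] .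
  note r = D2_rep[OF assms(1,2)]
  have nf: "\<not> iso C f" using N1_iso[OF assms(1)] assms unfolding N1_def by auto
  let ?m = "rank (mclass C (rep D ! 0))"
  show ?thesis
  proof (cases "?m = 0")
    case True then show ?thesis using rank_pos[OF assms(1) nf] by simp
  next
    case False
    then obtain E where E: "E \<in> PD ?m (mclass C (rep D ! 0))" using rank_PD[OF r(1)] by auto
    have E': "E \<in> Dbar C ?m (mclass C (rep D ! 0))" using E PD_sub by auto
    have "(D, E, dclass C [rep D ! 1]) \<in> SS ?m 1 ?c" unfolding SS_def using assms(2) E' Dbar1[OF r(4)] by simp
    then have "(D, E, dclass C [rep D ! 1]) \<in> split_map ?m ` Dbar C (?m + 1) ?c"
      using split_onto[OF c, of ?m 1] False by simp
    then obtain T where T1: "T \<in> Dbar C (?m + 1) ?c" and T2: "(D, E, dclass C [rep D ! 1]) = split_map ?m T"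
      by blast
    note T = T1 T2[symmetric]
    have "T \<in> PD (?m + 1) ?c" using PD_split[OF c _ _ T] False E PD1[OF r(4) assms(3)] by simp
    then have "?m + 1 \<le> rank ?c" using rank_ge[OF c] by auto
    then show ?thesis by simp
  qed
qed

end

definition iv :: "'a::comm_ring_1 \<Rightarrow> 'a" where "iv r = (SOME v. r * v = 1)"

lemma iv_unit: "(r::'a::comm_ring_1) dvd 1 \<Longrightarrow> r * iv r = 1"
  unfolding iv_def by (rule someI_ex) (metis dvd_def)

context CE begin

definition uL where "uL \<alpha> c = \<alpha> (mclass C (Idm C (Dom C (SOME g. g \<in> c))))"
definition uR where "uR \<alpha> c = \<alpha> (mclass C (Idm C (Cod C (SOME g. g \<in> c))))"

lemma uL_eq: assumes "f \<in> Mor C" shows "uL \<alpha> (mclass C f) = \<alpha> (mclass C (Idm C (Dom C f)))"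
proof -
  have "f \<in> mclass C f" using mor_iso_refl[OF assms] in_mclass by simp
  then have "(SOME g. g \<in> mclass C f) \<in> mclass C f" by (rule someI)
  then have "mor_iso C f (SOME g. g \<in> mclass C f)" using in_mclass by simp
  then show ?thesis unfolding uL_def using mor_iso_dom iso_obj_idclass by metis
qed

lemma uR_eq: assumes "f \<in> Mor C" shows "uR \<alpha> (mclass C f) = \<alpha> (mclass C (Idm C (Cod C f)))"
proof -
  have "f \<in> mclass C f" using mor_iso_refl[OF assms] in_mclass by simp
  then have "(SOME g. g \<in> mclass C f) \<in> mclass C f" by (rule someI)
  then have "mor_iso C f (SOME g. g \<in> mclass C f)" using in_mclass by simp
  then show ?thesis unfolding uR_def using mor_iso_cod iso_obj_idclass by metis
qed

primrec BR where
  "BR \<alpha> 0 c = 0"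
| "BR \<alpha> (Suc k) c = iv (uL \<alpha> c) * (delta c - (\<Sum>D\<in>N0 c. \<alpha> (mclass C (rep D ! 0)) * BR \<alpha> k (mclass C (rep D ! 1))))"

primrec BL where
  "BL \<alpha> 0 c = 0"
| "BL \<alpha> (Suc k) c = (delta c - (\<Sum>D\<in>N1 c. BL \<alpha> k (mclass C (rep D ! 0)) * \<alpha> (mclass C (rep D ! 1)))) * iv (uR \<alpha> c)"

lemma BR_stab: "c \<in> Cbar1 C \<Longrightarrow> rank c < k \<Longrightarrow> BR \<alpha> k c = BR \<alpha> (Suc (rank c)) c"
proof (induction k arbitrary: c rule: less_induct)
  case (less k c)
  obtain k' where k: "k = Suc k'" using less.prems by (cases k) auto
  obtain f where f: "f \<in> Mor C" "c = mclass C f" using cls_obtain[OF less.prems(1)] by blast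
  have "(\<Sum>D\<in>N0 c. \<alpha> (mclass C (rep D ! 0)) * BR \<alpha> k' (mclass C (rep D ! 1))) =
        (\<Sum>D\<in>N0 c. \<alpha> (mclass C (rep D ! 0)) * BR \<alpha> (rank c) (mclass C (rep D ! 1)))"
  proof (rule sum.cong[OF refl])
    fix D assume D: "D \<in> N0 c"
    then have D2: "D \<in> Dbar C 2 (mclass C f)" "\<not> iso C (rep D ! 0)" using f unfolding N0_def by auto
    note r = D2_rep[OF f(1) D2(1)]
    have lt: "rank (mclass C (rep D ! 1)) < rank c" using RD0[OF f(1) D2] f by simp
    have "BR \<alpha> k' (mclass C (rep D ! 1)) = BR \<alpha> (Suc (rank (mclass C (rep D ! 1)))) (mclass C (rep D ! 1))"
      using less.IH[of k' "mclass C (rep D ! 1)"] k r lt less.prems by simp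
    moreover have "BR \<alpha> (rank c) (mclass C (rep D ! 1)) = BR \<alpha> (Suc (rank (mclass C (rep D ! 1)))) (mclass C (rep D ! 1))"
      using less.IH[of "rank c" "mclass C (rep D ! 1)"] k r lt less.prems by simp
    ultimately show "\<alpha> (mclass C (rep D ! 0)) * BR \<alpha> k' (mclass C (rep D ! 1)) =
        \<alpha> (mclass C (rep D ! 0)) * BR \<alpha> (rank c) (mclass C (rep D ! 1))" by simp
  qed
  then show ?case using k by simp
qed

lemma BL_stab: "c \<in> Cbar1 C \<Longrightarrow> rank c < k \<Longrightarrow> BL \<alpha> k c = BL \<alpha> (Suc (rank c)) c"
proof (induction k arbitrary: c rule: less_induct)
  case (less k c)
  obtain k' where k: "k = Suc k'" using less.prems by (cases k) auto
  obtain f where f: "f \<in> Mor C" "c = mclass C f" using cls_obtain[OF less.prems(1)] by blast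
  have "(\<Sum>D\<in>N1 c. BL \<alpha> k' (mclass C (rep D ! 0)) * \<alpha> (mclass C (rep D ! 1))) =
        (\<Sum>D\<in>N1 c. BL \<alpha> (rank c) (mclass C (rep D ! 0)) * \<alpha> (mclass C (rep D ! 1)))"
  proof (rule sum.cong[OF refl])
    fix D assume D: "D \<in> N1 c"
    then have D2: "D \<in> Dbar C 2 (mclass C f)" "\<not> iso C (rep D ! 1)" using f unfolding N1_def by auto
    note r = D2_rep[OF f(1) D2(1)]
    have lt: "rank (mclass C (rep D ! 0)) < rank c" using RD1[OF f(1) D2] f by simp
    have "BL \<alpha> k' (mclass C (rep D ! 0)) = BL \<alpha> (Suc (rank (mclass C (rep D ! 0)))) (mclass C (rep D ! 0))"
      using less.IH[of k' "mclass C (rep D ! 0)"] k r lt less.prems by simp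
    moreover have "BL \<alpha> (rank c) (mclass C (rep D ! 0)) = BL \<alpha> (Suc (rank (mclass C (rep D ! 0)))) (mclass C (rep D ! 0))"
      using less.IH[of "rank c" "mclass C (rep D ! 0)"] k r lt less.prems by simp
    ultimately show "BL \<alpha> k' (mclass C (rep D ! 0)) * \<alpha> (mclass C (rep D ! 1)) =
        BL \<alpha> (rank c) (mclass C (rep D ! 0)) * \<alpha> (mclass C (rep D ! 1))" by simp
  qed
  then show ?case using k by simp
qed

definition betaR where "betaR \<alpha> c = BR \<alpha> (Suc (rank c)) c"
definition betaL where "betaL \<alpha> c = BL \<alpha> (Suc (rank c)) c"

lemma right_inv: assumes u: "\<forall>x\<in>Ob C. \<alpha> (mclass C (Idm C x)) dvd 1" and f: "f \<in> Mor C"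
  shows "conv C \<alpha> (betaR \<alpha>) (mclass C f) = delta (mclass C f)"
proof -
  let ?c = "mclass C f"
  let ?u = "\<alpha> (mclass C (Idm C (Dom C f)))"
  have "?u dvd 1" using u dom_ob f by blast
  then have uu: "?u * iv ?u = 1" by (rule iv_unit)
  let ?S = "\<Sum>D\<in>N0 ?c. \<alpha> (mclass C (rep D ! 0)) * betaR \<alpha> (mclass C (rep D ! 1))"
  have S: "(\<Sum>D\<in>N0 ?c. \<alpha> (mclass C (rep D ! 0)) * BR \<alpha> (rank ?c) (mclass C (rep D ! 1))) = ?S"
  proof (rule sum.cong[OF refl])
    fix D assume D: "D \<in> N0 ?c"
    then have D2: "D \<in> Dbar C 2 ?c" "\<not> iso C (rep D ! 0)" unfolding N0_def by auto
    note r = D2_rep[OF f D2(1)]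
    have lt: "rank (mclass C (rep D ! 1)) < rank ?c" using RD0[OF f D2] by simp
    show "\<alpha> (mclass C (rep D ! 0)) * BR \<alpha> (rank ?c) (mclass C (rep D ! 1)) = \<alpha> (mclass C (rep D ! 0)) * betaR \<alpha> (mclass C (rep D ! 1))"
      unfolding betaR_def using BR_stab[OF r(2) lt, of \<alpha>] by (simp del: BR.simps)
  qed
  have "betaR \<alpha> ?c = iv (uL \<alpha> ?c) * (delta ?c - (\<Sum>D\<in>N0 ?c. \<alpha> (mclass C (rep D ! 0)) * BR \<alpha> (rank ?c) (mclass C (rep D ! 1))))"
    by (simp only: betaR_def BR.simps)
  then have "betaR \<alpha> ?c = iv ?u * (delta ?c - ?S)" using S by (simp add: uL_eq[OF f])
  moreover have "conv C \<alpha> (betaR \<alpha>) ?c = ?u * betaR \<alpha> ?c + ?S" by (rule conv_split0[OF f])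
  ultimately have "conv C \<alpha> (betaR \<alpha>) ?c = ?u * (iv ?u * (delta ?c - ?S)) + ?S" by simp
  also have "\<dots> = delta ?c"
  proof -
    have "?u * (iv ?u * (delta ?c - ?S)) = (?u * iv ?u) * (delta ?c - ?S)" by (rule mult.assoc[symmetric])
    then show ?thesis using uu by simp
  qed
  finally show ?thesis .
qed

lemma left_inv: assumes u: "\<forall>x\<in>Ob C. \<alpha> (mclass C (Idm C x)) dvd 1" and f: "f \<in> Mor C"
  shows "conv C (betaL \<alpha>) \<alpha> (mclass C f) = delta (mclass C f)"
proof -
  let ?c = "mclass C f"
  let ?u = "\<alpha> (mclass C (Idm C (Cod C f)))"
  have "?u dvd 1" using u cod_ob f by blast
  then have uu: "?u * iv ?u = 1" by (rule iv_unit)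
  let ?S = "\<Sum>D\<in>N1 ?c. betaL \<alpha> (mclass C (rep D ! 0)) * \<alpha> (mclass C (rep D ! 1))"
  have S: "(\<Sum>D\<in>N1 ?c. BL \<alpha> (rank ?c) (mclass C (rep D ! 0)) * \<alpha> (mclass C (rep D ! 1))) = ?S"
  proof (rule sum.cong[OF refl])
    fix D assume D: "D \<in> N1 ?c"
    then have D2: "D \<in> Dbar C 2 ?c" "\<not> iso C (rep D ! 1)" unfolding N1_def by auto
    note r = D2_rep[OF f D2(1)]
    have lt: "rank (mclass C (rep D ! 0)) < rank ?c" using RD1[OF f D2] by simp
    show "BL \<alpha> (rank ?c) (mclass C (rep D ! 0)) * \<alpha> (mclass C (rep D ! 1)) = betaL \<alpha> (mclass C (rep D ! 0)) * \<alpha> (mclass C (rep D ! 1))"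
      unfolding betaL_def using BL_stab[OF r(1) lt, of \<alpha>] by (simp del: BL.simps)
  qed
  have "betaL \<alpha> ?c = (delta ?c - (\<Sum>D\<in>N1 ?c. BL \<alpha> (rank ?c) (mclass C (rep D ! 0)) * \<alpha> (mclass C (rep D ! 1)))) * iv (uR \<alpha> ?c)"
    by (simp only: betaL_def BL.simps)
  then have "betaL \<alpha> ?c = (delta ?c - ?S) * iv ?u" using S by (simp add: uR_eq[OF f])
  moreover have "conv C (betaL \<alpha>) \<alpha> ?c = betaL \<alpha> ?c * ?u + ?S" by (rule conv_split1[OF f])
  ultimately have "conv C (betaL \<alpha>) \<alpha> ?c = (delta ?c - ?S) * iv ?u * ?u + ?S" by simp
  also have "\<dots> = delta ?c"
  proof -
    have "(delta ?c - ?S) * iv ?u * ?u = (delta ?c - ?S) * (?u * iv ?u)" by (simp only: mult.assoc mult.commute[of "iv ?u"])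
    then show ?thesis using uu by simp
  qed
  finally show ?thesis .
qed

end

context CE begin

lemma LR: assumes u: "\<forall>x\<in>Ob C. \<alpha> (mclass C (Idm C x)) dvd 1" and c: "c \<in> Cbar1 C"
  shows "betaL \<alpha> c = betaR \<alpha> c"
proof -
  obtain f where f: "f \<in> Mor C" "c = mclass C f" using cls_obtain[OF c] by blast
  have R: "\<forall>c\<in>Cbar1 C. delta c = conv C \<alpha> (betaR \<alpha>) c" using right_inv[OF u] unfolding Cbar1_def by auto
  have L: "\<forall>c\<in>Cbar1 C. conv C (betaL \<alpha>) \<alpha> c = delta c" using left_inv[OF u] unfolding Cbar1_def by auto
  have "betaL \<alpha> c = conv C (betaL \<alpha>) delta c" using f by (simp add: delta_right[OF f(1)])
  also have "\<dots> = conv C (betaL \<alpha>) (conv C \<alpha> (betaR \<alpha>)) c" using conv_cong[of "betaL \<alpha>" "betaL \<alpha>" delta, OF _ R f(1)] f by simp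
  also have "\<dots> = conv C (conv C (betaL \<alpha>) \<alpha>) (betaR \<alpha>) c" unfolding f(2) by (rule conv_assoc[OF f(1), symmetric])
  also have "\<dots> = conv C delta (betaR \<alpha>) c" using conv_cong[OF L _ f(1), of "betaR \<alpha>" "betaR \<alpha>"] f by simp
  also have "\<dots> = betaR \<alpha> c" using delta_left[OF f(1)] f by simp
  finally show ?thesis .
qed

lemma inv_exists: assumes u: "\<forall>x\<in>Ob C. \<alpha> (mclass C (Idm C x)) dvd 1"
  shows "conv_inverse C \<alpha> (betaR \<alpha>)"
  unfolding conv_inverse_def
proof (intro exI[of _ delta] conjI ballI)
  show "conv_identity C delta" by (rule delta_identity)
  fix c assume c: "c \<in> Cbar1 C"
  obtain f where f: "f \<in> Mor C" "c = mclass C f" using cls_obtain[OF c] by blast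
  show "conv C \<alpha> (betaR \<alpha>) c = delta c" using right_inv[OF u f(1)] f by simp
  have "\<forall>c\<in>Cbar1 C. betaR \<alpha> c = betaL \<alpha> c" using LR[OF u] by simp
  then have "conv C (betaR \<alpha>) \<alpha> c = conv C (betaL \<alpha>) \<alpha> c" using conv_cong[of "betaR \<alpha>" "betaL \<alpha>" \<alpha> \<alpha> f] f by simp
  then show "conv C (betaR \<alpha>) \<alpha> c = delta c" using left_inv[OF u f(1)] f by simp
qed

lemma inv_units: assumes "conv_invertible C \<alpha>" shows "\<forall>x\<in>Ob C. \<alpha> (mclass C (Idm C x)) dvd 1"
proof
  fix x assume x: "x \<in> Ob C"
  obtain \<beta> e where e: "conv_identity C e" "\<forall>c\<in>Cbar1 C. conv C \<alpha> \<beta> c = e c"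
    using assms unfolding conv_invertible_def conv_inverse_def by blast
  let ?g = "Idm C x"
  have g: "?g \<in> Mor C" "iso C ?g" "Dom C ?g = x" using x iso_id by auto
  have "conv C \<alpha> \<beta> (mclass C ?g) = \<alpha> (mclass C ?g) * \<beta> (mclass C ?g)"
    using conv_split0[OF g(1), of \<alpha> \<beta>] N0_iso[OF g(1,2)] g by simp
  moreover have "conv C \<alpha> \<beta> (mclass C ?g) = e (mclass C ?g)" using e mclass_cls[OF g(1)] by blast
  moreover have "e (mclass C ?g) = 1" using identity_unique[OF e(1) mclass_cls[OF g(1)]] delta_id[OF x] by simp
  ultimately have "1 = \<alpha> (mclass C ?g) * \<beta> (mclass C ?g)" by simp
  then show "\<alpha> (mclass C ?g) dvd 1" unfolding dvd_def by blast
qed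

end

context CE begin

lemma card_split: assumes f: "f \<in> Mor C" and n: "1 \<le> n"
  shows "card (PD (1+n) (mclass C f)) = (\<Sum>D\<in>N0 (mclass C f). card (PD n (mclass C (rep D ! 1))))"
proof -
  let ?c = "mclass C f"
  have c: "?c \<in> Cbar1 C" using mclass_cls[OF f] .
  let ?Q = "SIGMA D:N0 ?c. PD 1 (mclass C (rep D ! 0)) \<times> PD n (mclass C (rep D ! 1))"
  have inj: "inj_on (split_map 1) (PD (1+n) ?c)"
    using split_inj[OF c _ n, of 1] PD_sub inj_on_subset by blast
  have img: "split_map 1 ` PD (1+n) ?c = ?Q"
  proof
    show "split_map 1 ` PD (1+n) ?c \<subseteq> ?Q"
    proof
      fix X assume "X \<in> split_map 1 ` PD (1+n) ?c"
      then obtain T where T: "T \<in> PD (1+n) ?c" "X = split_map 1 T" by blast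
      have T': "T \<in> Dbar C (1+n) ?c" using T PD_sub by blast
      obtain D E1 E2 where X: "split_map 1 T = (D, E1, E2)" by (cases "split_map 1 T") auto
      have S: "(D, E1, E2) \<in> SS 1 n ?c" using split_into[OF c _ n T'] X by simp
      then have D: "D \<in> Dbar C 2 ?c" unfolding SS_def by auto
      note r = D2_rep[OF f D]
      have P: "E1 \<in> PD 1 (mclass C (rep D ! 0))" "E2 \<in> PD n (mclass C (rep D ! 1))"
        using PD_split[OF c _ n T' X] T by auto
      have "\<not> iso C (rep D ! 0)"
      proof
        assume "iso C (rep D ! 0)"
        then have "PD 1 (mclass C (rep D ! 0)) = {}" using PD_iso[OF r(1)] isocls_mclass[OF r(3)] by simp
        then show False using P by simp
      qed
      then show "X \<in> ?Q" using T X P D unfolding N0_def by simp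
    qed
    show "?Q \<subseteq> split_map 1 ` PD (1+n) ?c"
    proof
      fix X assume X: "X \<in> ?Q"
      then obtain D E1 E2 where X': "X = (D, E1, E2)" "D \<in> N0 ?c" "E1 \<in> PD 1 (mclass C (rep D ! 0))"
        "E2 \<in> PD n (mclass C (rep D ! 1))" by auto
      have "X \<in> SS 1 n ?c" using X' PD_sub unfolding SS_def N0_def by blast
      then have "X \<in> split_map 1 ` Dbar C (1+n) ?c" using split_onto[of ?c 1 n X] c n by simp
      then obtain T where T: "T \<in> Dbar C (1+n) ?c" "X = split_map 1 T" by blast
      have "T \<in> PD (1+n) ?c" using PD_split[OF c _ n T(1), of D E1 E2] T(2) X' by simp
      then show "X \<in> split_map 1 ` PD (1+n) ?c" using T(2) by blast
    qed
  qed
  have "card (PD (1+n) ?c) = card ?Q" using card_image[OF inj] img by simp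
  also have "\<dots> = (\<Sum>D\<in>N0 ?c. card (PD 1 (mclass C (rep D ! 0)) \<times> PD n (mclass C (rep D ! 1))))"
  proof (rule card_SigmaI)
    show "finite (N0 ?c)" using Dbar2_fin[OF f] unfolding N0_def by simp
    show "\<forall>a\<in>N0 ?c. finite (PD 1 (mclass C (rep a ! 0)) \<times> PD n (mclass C (rep a ! 1)))"
    proof
      fix D assume "D \<in> N0 ?c"
      then have D: "D \<in> Dbar C 2 ?c" unfolding N0_def by auto
      note r = D2_rep[OF f D]
      show "finite (PD 1 (mclass C (rep D ! 0)) \<times> PD n (mclass C (rep D ! 1)))"
        using PD_fin[OF r(1)] PD_fin[OF r(2) n] by simp
    qed
  qed
  also have "\<dots> = (\<Sum>D\<in>N0 ?c. card (PD n (mclass C (rep D ! 1))))"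
  proof (rule sum.cong[OF refl])
    fix D assume "D \<in> N0 ?c"
    then have D: "D \<in> Dbar C 2 ?c" "\<not> iso C (rep D ! 0)" unfolding N0_def by auto
    note r = D2_rep[OF f D(1)]
    have "PD 1 (mclass C (rep D ! 0)) = {dclass C [rep D ! 0]}" using PD1[OF r(3) D(2)] .
    then show "card (PD 1 (mclass C (rep D ! 0)) \<times> PD n (mclass C (rep D ! 1))) = card (PD n (mclass C (rep D ! 1)))"
      by (simp add: card_cartesian_product)
  qed
  finally show ?thesis .
qed

lemma N0_iso1: assumes f: "f \<in> Mor C" "\<not> iso C f"
  shows "{D \<in> N0 (mclass C f). iso C (rep D ! 1)} = {dclass C [f, Idm C (Cod C f)]}"
proof -
  let ?D1 = "dclass C [f, Idm C (Cod C f)]"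
  have "\<not> iso C (rep ?D1 ! 0)"
  proof -
    have "mclass C (rep ?D1 ! 0) = mclass C f" using D1_classes[OF f(1)] by simp
    moreover have "rep ?D1 ! 0 \<in> Mor C"
      using D2_rep[OF f(1), of ?D1] D2_iso1[OF f(1)] by blast
    ultimately have "mor_iso C (rep ?D1 ! 0) f" using mclass_eq_iff by blast
    then show ?thesis using mor_iso_iso_iff f(2) by blast
  qed
  then show ?thesis using D2_iso1[OF f(1)] unfolding N0_def by blast
qed

definition Fm where "Fm c N = (\<Sum>n\<in>{1..N}. (-1) ^ n * of_nat (card (PD n c)))"

lemma Fm_iso: "c \<in> Cbar1 C \<Longrightarrow> isocls c \<Longrightarrow> Fm c N = 0"
  unfolding Fm_def using PD_iso by simp

lemma Fm_stable: assumes c: "c \<in> Cbar1 C" and N: "rank c \<le> N" shows "Fm c N = Fm c (rank c)"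
proof -
  show ?thesis unfolding Fm_def
  proof (rule sum.mono_neutral_right)
    show "finite {1..N}" by simp
    show "{1..rank c} \<subseteq> {1..N}" using N by auto
    show "\<forall>i\<in>{1..N} - {1..rank c}. (-1) ^ i * of_nat (card (PD i c)) = 0"
    proof
      fix i assume i: "i \<in> {1..N} - {1..rank c}"
      have "PD i c = {}" using rank_ge[OF c, of i] i by auto
      then show "(-1) ^ i * of_nat (card (PD i c)) = 0" by simp
    qed
  qed
qed

end

context CE begin

lemma delta_iso: assumes "f \<in> Mor C" "iso C f" shows "delta (mclass C f) = 1"
  unfolding deltaC_def using assms mor_iso_refl in_mclass by auto

lemma delta_niso: assumes "f \<in> Mor C" "\<not> iso C f" shows "delta (mclass C f) = 0"
  unfolding deltaC_def using assms isocls_mclass[unfolded isocls_def] by auto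

lemma mu_iso: assumes hyp: "\<forall>c\<in>Cbar1 C. conv C (\<lambda>_. 1) \<mu> c = delta c" and f: "f \<in> Mor C" "iso C f"
  shows "\<mu> (mclass C f) = 1"
proof -
  have "conv C (\<lambda>_. 1) \<mu> (mclass C f) = 1 * \<mu> (mclass C f) + (\<Sum>D\<in>N0 (mclass C f). 1 * \<mu> (mclass C (rep D ! 1)))"
    by (rule conv_split0[OF f(1)])
  then have "conv C (\<lambda>_. 1) \<mu> (mclass C f) = \<mu> (mclass C f)" using N0_iso[OF f] by simp
  moreover have "conv C (\<lambda>_. 1) \<mu> (mclass C f) = 1" using hyp mclass_cls[OF f(1)] delta_iso[OF f] by simp
  ultimately show ?thesis by simp
qed

lemma mu_rec: assumes hyp: "\<forall>c\<in>Cbar1 C. conv C (\<lambda>_. 1) \<mu> c = delta c" and f: "f \<in> Mor C" "\<not> iso C f"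
  shows "\<mu> (mclass C f) = - (\<Sum>D\<in>N0 (mclass C f). \<mu> (mclass C (rep D ! 1)))"
proof -
  have "conv C (\<lambda>_. 1) \<mu> (mclass C f) = 1 * \<mu> (mclass C f) + (\<Sum>D\<in>N0 (mclass C f). 1 * \<mu> (mclass C (rep D ! 1)))"
    by (rule conv_split0[OF f(1)])
  moreover have "conv C (\<lambda>_. 1) \<mu> (mclass C f) = 0" using hyp mclass_cls[OF f(1)] delta_niso[OF f] by simp
  ultimately show ?thesis by (simp add: eq_neg_iff_add_eq_0)
qed

lemma mu_noniso: fixes \<mu> :: "_ \<Rightarrow> 'z::comm_ring_1" assumes hyp: "\<forall>c\<in>Cbar1 C. conv C (\<lambda>_. 1) \<mu> c = delta c"
  shows "\<forall>f. f \<in> Mor C \<longrightarrow> \<not> iso C f \<longrightarrow> rank (mclass C f) = r \<longrightarrow> \<mu> (mclass C f) = Fm (mclass C f) r"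
proof (induction r rule: less_induct)
  case (less r)
  show ?case
  proof (intro allI impI)
    fix f assume f: "f \<in> Mor C" "\<not> iso C f" and rk: "rank (mclass C f) = r"
    let ?c = "mclass C f"
    have c: "?c \<in> Cbar1 C" using mclass_cls[OF f(1)] .
    obtain N' where N': "r = Suc N'" using rank_pos[OF f] rk by (cases r) auto
    have claim: "\<mu> (mclass C (rep D ! 1)) = (if iso C (rep D ! 1) then 1 else 0) + Fm (mclass C (rep D ! 1)) N'"
      if D: "D \<in> N0 ?c" for D
    proof -
      have D2: "D \<in> Dbar C 2 ?c" "\<not> iso C (rep D ! 0)" using D unfolding N0_def by auto
      note r = D2_rep[OF f(1) D2(1)]
      have lt: "rank (mclass C (rep D ! 1)) < r" using RD0[OF f(1) D2] rk by simp
      show ?thesis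
      proof (cases "iso C (rep D ! 1)")
        case True
        then show ?thesis using mu_iso[OF hyp r(4) True] Fm_iso[OF r(2)] isocls_mclass[OF r(4)] by simp
      next
        case False
        have "\<mu> (mclass C (rep D ! 1)) = Fm (mclass C (rep D ! 1)) (rank (mclass C (rep D ! 1)))"
          using less.IH[OF lt] r(4) False by blast
        also have "\<dots> = Fm (mclass C (rep D ! 1)) N'"
          by (rule Fm_stable[OF r(2), symmetric]) (use lt N' in simp)
        finally show ?thesis using False by simp
      qed
    qed
    have fin: "finite (N0 ?c)" using Dbar2_fin[OF f(1)] unfolding N0_def by simp
    have s1: "(\<Sum>D\<in>N0 ?c. (if iso C (rep D ! 1) then 1 else 0)) = (1::'z)"
    proof -
      have "(\<Sum>D\<in>N0 ?c. (if iso C (rep D ! 1) then 1 else 0)) = (\<Sum>D\<in>{D \<in> N0 ?c. iso C (rep D ! 1)}. (1::'z))"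
        by (rule sum.inter_filter[OF fin, symmetric])
      then show ?thesis using N0_iso1[OF f] by simp
    qed
    have s2: "(\<Sum>D\<in>N0 ?c. Fm (mclass C (rep D ! 1)) N') = (\<Sum>n\<in>{1..N'}. (-1) ^ n * of_nat (card (PD (1+n) ?c)) :: 'z)"
    proof -
      have "(\<Sum>D\<in>N0 ?c. Fm (mclass C (rep D ! 1)) N') =
            (\<Sum>D\<in>N0 ?c. \<Sum>n\<in>{1..N'}. (-1) ^ n * of_nat (card (PD n (mclass C (rep D ! 1)))) :: 'z)"
        unfolding Fm_def by simp
      also have "\<dots> = (\<Sum>n\<in>{1..N'}. \<Sum>D\<in>N0 ?c. (-1) ^ n * of_nat (card (PD n (mclass C (rep D ! 1)))))"
        by (rule sum.swap)
      also have "\<dots> = (\<Sum>n\<in>{1..N'}. (-1) ^ n * of_nat (card (PD (1+n) ?c)))"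
      proof (rule sum.cong[OF refl])
        fix n assume "n \<in> {1..N'}"
        then have n: "1 \<le> n" by simp
        show "(\<Sum>D\<in>N0 ?c. (-1) ^ n * of_nat (card (PD n (mclass C (rep D ! 1))))) = (-1) ^ n * of_nat (card (PD (1+n) ?c))"
          using card_split[OF f(1) n] by (simp add: sum_distrib_left)
      qed
      finally show ?thesis .
    qed
    have "\<mu> ?c = - (\<Sum>D\<in>N0 ?c. \<mu> (mclass C (rep D ! 1)))" using mu_rec[OF hyp f] .
    also have "\<dots> = - (\<Sum>D\<in>N0 ?c. (if iso C (rep D ! 1) then 1 else 0) + Fm (mclass C (rep D ! 1)) N')"
      using claim by simp
    also have "\<dots> = - (1 + (\<Sum>n\<in>{1..N'}. (-1) ^ n * of_nat (card (PD (1+n) ?c))))"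
      by (simp only: sum.distrib s1 s2)
    also have "\<dots> = Fm ?c r"
    proof -
      have "Fm ?c r = (-1::'z) ^ 1 * of_nat (card (PD 1 ?c)) + (\<Sum>n\<in>{Suc 1..Suc N'}. (-1) ^ n * of_nat (card (PD n ?c)))"
        unfolding Fm_def N' by (rule sum.atLeast_Suc_atMost) simp
      also have "\<dots> = - 1 + (\<Sum>n\<in>{1..N'}. (-1) ^ (Suc n) * of_nat (card (PD (Suc n) ?c)))"
        using PD1[OF f] by (simp only: sum.shift_bounds_cl_Suc_ivl) simp
      also have "\<dots> = - (1 + (\<Sum>n\<in>{1..N'}. (-1) ^ n * of_nat (card (PD (1+n) ?c))))"
        by (simp add: sum_negf mult.assoc sum_distrib_left[symmetric] mult_minus_left)
      finally show ?thesis by simp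
    qed
    finally show "\<mu> ?c = Fm ?c r" .
  qed
qed

end

context CE begin

lemma formula_eq: assumes f: "f \<in> Mor C" "\<not> iso C f"
  shows "Fm (mclass C f) (rank (mclass C f)) =
    (\<Sum>n\<in>{n. 1 \<le> n \<and> PDbar C n (mclass C f) \<noteq> {}}. (-1) ^ n * of_nat (card (PDbar C n (mclass C f))) :: 'z::comm_ring_1)"
proof -
  let ?c = "mclass C f"
  have c: "?c \<in> Cbar1 C" using mclass_cls[OF f(1)] .
  have ni: "\<not> isocls ?c" using isocls_mclass[OF f(1)] f(2) by simp
  have S: "{n. 1 \<le> n \<and> PDbar C n ?c \<noteq> {}} = {n. 1 \<le> n \<and> PD n ?c \<noteq> {}}" using PD_eq[OF c ni] by auto
  have "(\<Sum>n\<in>{n. 1 \<le> n \<and> PDbar C n ?c \<noteq> {}}. (-1) ^ n * of_nat (card (PDbar C n ?c)) :: 'z) =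
        (\<Sum>n\<in>{n. 1 \<le> n \<and> PD n ?c \<noteq> {}}. (-1) ^ n * of_nat (card (PD n ?c)))"
    unfolding S by (rule sum.cong[OF refl]) (simp add: PD_eq[OF c ni])
  also have "\<dots> = (\<Sum>n\<in>{1..rank ?c}. (-1) ^ n * of_nat (card (PD n ?c)))"
  proof (rule sum.mono_neutral_left)
    show "finite {1..rank ?c}" by simp
    show "{n. 1 \<le> n \<and> PD n ?c \<noteq> {}} \<subseteq> {1..rank ?c}"
    proof
      fix n assume "n \<in> {n. 1 \<le> n \<and> PD n ?c \<noteq> {}}"
      then have n: "1 \<le> n" "PD n ?c \<noteq> {}" by auto
      then show "n \<in> {1..rank ?c}" using rank_ge[OF c n] by simp
    qed
    show "\<forall>i\<in>{1..rank ?c} - {n. 1 \<le> n \<and> PD n ?c \<noteq> {}}. (-1) ^ i * of_nat (card (PD i ?c)) = (0::'z)" by auto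
  qed
  finally show ?thesis unfolding Fm_def by simp
qed

end

theorem theorem8p3:
  fixes C :: "('o, 'm) cat"
  assumes "category C"
    and "ess_finite_decomp C"
    and "iso_filling C"
    and "rat_algebra TYPE('r::comm_ring_1)"
  shows "(\<forall>\<alpha> :: 'm set \<Rightarrow> 'r. conv_invertible C \<alpha> \<longleftrightarrow>
            (\<forall>x\<in>Ob C. \<alpha> (mclass C (Idm C x)) dvd 1))
       \<and> conv_invertible C (\<lambda>_. 1 :: 'r)
       \<and> (\<forall>\<mu> :: 'm set \<Rightarrow> 'r. conv_inverse C (\<lambda>_. 1) \<mu> \<longrightarrow>
            (\<forall>f\<in>Mor C. \<mu> (mclass C f) =
               (if iso C f then 1
                else (\<Sum>n\<in>{n. 1 \<le> n \<and> PDbar C n (mclass C f) \<noteq> {}}.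
                        (-1) ^ n * of_nat (card (PDbar C n (mclass C f)))))))"
proof -
  interpret CE C
    by unfold_locales (use assms in \<open>auto simp: CC_def\<close>)
  have P1: "conv_invertible C \<alpha> \<longleftrightarrow> (\<forall>x\<in>Ob C. \<alpha> (mclass C (Idm C x)) dvd 1)" for \<alpha> :: "'m set \<Rightarrow> 'r"
    using inv_units inv_exists unfolding conv_invertible_def by blast
  have P2: "conv_invertible C (\<lambda>_. 1 :: 'r)" using P1 by simp
  have P3: "\<mu> (mclass C f) =
               (if iso C f then 1
                else (\<Sum>n\<in>{n. 1 \<le> n \<and> PDbar C n (mclass C f) \<noteq> {}}.
                        (-1) ^ n * of_nat (card (PDbar C n (mclass C f)))))"
    if inv: "conv_inverse C (\<lambda>_. 1) \<mu>" and f: "f \<in> Mor C" for \<mu> :: "'m set \<Rightarrow> 'r" and f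
  proof -
    obtain e where e: "conv_identity C e" "\<forall>c\<in>Cbar1 C. conv C (\<lambda>_. 1) \<mu> c = e c"
      using inv unfolding conv_inverse_def by blast
    have hyp: "\<forall>c\<in>Cbar1 C. conv C (\<lambda>_. 1) \<mu> c = delta c" using e by (simp add: identity_unique[OF e(1)])
    show ?thesis
    proof (cases "iso C f")
      case True then show ?thesis using mu_iso[OF hyp f True] by simp
    next
      case False
      have "\<mu> (mclass C f) = Fm (mclass C f) (rank (mclass C f))" using mu_noniso[OF hyp] f False by blast
      then show ?thesis using formula_eq[OF f False] False by simp
    qed
  qed
  show ?thesis using P1 P2 P3 by blast
qed

end
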